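(* Let $\mathcal P$ and $\mathcal Q$ be down-right paths with $\mathcal Q$ above $\mathcal P$. (1) For every $\boldsymbol\lambda_1'\in\mathbb Z^{N+1}$, $$\sum_{\boldsymbol\lambda_1\in\mathbb Z^{N+1}}\mathrm U^{\mathcal P,\mathcal Q}(\boldsymbol\lambda_1'\,|\,\boldsymbol\lambda_1)\,\mathrm{wt}^{\mathcal P}(\boldsymbol\lambda_1)=\mathrm{wt}^{\mathcal Q}(\boldsymbol\lambda_1').$$ (2) Assume moreover $c_1c_2<1$. If $\mathbf L_1\in\mathbb Z^N$ has law $\mathrm P^{\mathcal P}$ and the LPP is started from $G(\mathbf p_0)=0$, $G(\mathbf p_j)=L_1(j)$ ($1\le j\le N$), then $(G(\mathbf q_j)-G(\mathbf q_0))_{1\le j\le N}$ has law $\mathrm P^{\mathcal Q}$; equivalently, for all $\mathbf L_1'\in\mathbb Z^N$, $\sum_{\mathbf L_1\in\mathbb Z^N}\mathbf U^{\mathcal P,\mathcal Q}(\mathbf L_1'|\mathbf L_1)\mathrm P^{\mathcal P}(\mathbf L_1)=\mathrm P^{\mathcal Q}(\mathbf L_1')$, where $\mathbf U^{\mathcal P,\mathcal Q}(\mathbf L_1'|\mathbf L_1)=\sum_{x\in\mathbb Z}\mathrm U^{\mathcal P,\mathcal Q}((x,\mathbf L_1'+x)\,|\,(0,\mathbf L_1))$.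
   Context: Fix $N\ge1$, $a_1,\dots,a_N,c_1,c_2>0$ with $a_ia_j<1$, $a_ic_1<1$, $a_ic_2<1$; extend $a_{j+kN}=a_j$. Strip $\{(n,m)\in\mathbb Z^2:0\le m\le n\le m+N\}$; independent weights $\omega_{n,m}\sim\mathrm{Geom}(a_na_m)$ on bulk vertices ($0\le m<n<m+N$), $\omega_{m,m}\sim\mathrm{Geom}(a_mc_1)$, $\omega_{m+N,m}\sim\mathrm{Geom}(a_mc_2)$, where $\mathrm{Geom}(q)$ has mass $(1-q)q^n$ on $\mathbb Z_{\ge0}$. A down-right path is a sequence of strip vertices $\mathbf p_0=(m_0,m_0),\mathbf p_1,\dots,\mathbf p_N$ with steps in $\{(1,0),(0,-1)\}$; edge $\mathsf e_j$ ($\mathbf p_{j-1}\to\mathbf p_j$) is labelled $\ell_j=a_n$ if horizontal $(n-1,m)\to(n,m)$ and $\ell_j=a_m$ if vertical between $(n,m-1)$ and $(n,m)$. A vertex is above $\mathcal P$ if it is reachable from a vertex of $\mathcal P$ by an up-right lattice path in the strip; $\mathcal Q$ (vertices $\mathbf q_j$) is above $\mathcal P$ if all its vertices lie on or above $\mathcal P$. Given initial values $G(\mathbf p_j)$, for $(n,m)$ above $\mathcal P$ set $G(n,m)=\max_\pi\big(G(\pi(0))+\sum_{i=1}^{\ell}\omega_{\pi(i)}\big)$, over up-right paths $\pi$ in the strip from $\pi(0)\in\mathcal P$ to $\pi(\ell)=(n,m)$ touching $\mathcal P$ only at $\pi(0)$. $\mathrm U^{\mathcal P,\mathcal Q}(\boldsymbol\lambda'|\boldsymbol\lambda)$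 is the probability that $G(\mathbf q_j)=\lambda'^{(j)}$ for all $0\le j\le N$ given $G(\mathbf p_j)=\lambda^{(j)}$ for all $j$. Two-layer weight: with $(\mathrm{up}(j),\mathrm{low}(j))=(j,j-1)$ if $\mathsf e_j$ horizontal and $(j-1,j)$ if vertical, for $\boldsymbol\lambda=(\boldsymbol\lambda_1,\boldsymbol\lambda_2)$, $\boldsymbol\lambda_i=(\lambda_i^{(0)},\dots,\lambda_i^{(N)})\in\mathbb Z^{N+1}$, $\mathrm{wt}^{\mathcal{GP}}(\boldsymbol\lambda)=c_1^{\lambda_1^{(0)}-\lambda_2^{(0)}}c_2^{\lambda_1^{(N)}-\lambda_2^{(N)}}\prod_{j=1}^N\big[\prod_{i=1}^2\ell_j^{\lambda_i^{(\mathrm{up}(j))}-\lambda_i^{(\mathrm{low}(j))}}\mathbf 1\{\lambda_i^{(\mathrm{up}(j))}\ge\lambda_i^{(\mathrm{low}(j))}\}\big]\mathbf 1\{\lambda_1^{(\mathrm{low}(j))}\ge\lambda_2^{(\mathrm{up}(j))}\}$, and $\mathrm{wt}^{\mathcal P}(\boldsymbol\lambda_1)=\sum_{\boldsymbol\lambda_2\in\mathbb Z^{N+1}}\mathrm{wt}^{\mathcal{GP}}(\boldsymbol\lambda_1,\boldsymbol\lambda_2)$ (sums of nonnegative terms). This is invariant under adding a constant to all coordinates of $\boldsymbol\lambda_1$. When $c_1c_2<1$, $Z=\sum_{\lambda_1^{(1)},\dots,\lambda_1^{(N)}}\mathrm{wt}^{\mathcal P}(\boldsymbol\lambda_1)$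 (with $\lambda_1^{(0)}$ fixed) is finite, positive and independent of $\mathcal P$ and $\lambda_1^{(0)}$, and $\mathrm P^{\mathcal P}(\mathbf L_1):=\mathrm{wt}^{\mathcal P}(\boldsymbol\lambda_1)/Z$, where $L_1(j)=\lambda_1^{(j)}-\lambda_1^{(0)}$, is a probability mass function on $\mathbb Z^N$. *)

theory Defs
  imports "HOL-Probability.Probability"
begin

(* Vertices are pairs (n,m) of integers.  Vectors in Z^{N+1} (indices 0..N) are
   represented as functions nat => int vanishing for indices > N. *)

type_synonym vertex = "int \<times> int"

definition in_strip :: "nat \<Rightarrow> vertex \<Rightarrow> bool" where
  "in_strip N v \<longleftrightarrow> 0 \<le> snd v \<and> snd v \<le> fst v \<and> fst v \<le> snd v + int N"

definition Zvec :: "nat \<Rightarrow> (nat \<Rightarrow> int) set" where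
  "Zvec N = {f. \<forall>j>N. f j = 0}"

(* vectors (0, L_1) with L_1 in Z^N *)
definition Lvec :: "nat \<Rightarrow> (nat \<Rightarrow> int) set" where
  "Lvec N = {f. f 0 = 0 \<and> (\<forall>j>N. f j = 0)}"

definition down_right :: "nat \<Rightarrow> (nat \<Rightarrow> vertex) \<Rightarrow> bool" where
  "down_right N P \<longleftrightarrow> fst (P 0) = snd (P 0) \<and> (\<forall>j\<le>N. in_strip N (P j)) \<and>
     (\<forall>j\<in>{1..N}. P j = (fst (P (j-1)) + 1, snd (P (j-1))) \<or>
                   P j = (fst (P (j-1)), snd (P (j-1)) - 1))"

definition horiz :: "(nat \<Rightarrow> vertex) \<Rightarrow> nat \<Rightarrow> bool" where
  "horiz P j \<longleftrightarrow> P j = (fst (P (j-1)) + 1, snd (P (j-1)))"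

definition lab :: "(int \<Rightarrow> real) \<Rightarrow> (nat \<Rightarrow> vertex) \<Rightarrow> nat \<Rightarrow> real" where
  "lab a P j = (if horiz P j then a (fst (P j)) else a (snd (P (j-1))))"

definition up :: "(nat \<Rightarrow> vertex) \<Rightarrow> nat \<Rightarrow> nat" where
  "up P j = (if horiz P j then j else j - 1)"

definition low :: "(nat \<Rightarrow> vertex) \<Rightarrow> nat \<Rightarrow> nat" where
  "low P j = (if horiz P j then j - 1 else j)"

definition ind :: "bool \<Rightarrow> real" where
  "ind b = (if b then 1 else 0)"

definition wtGP :: "nat \<Rightarrow> (int \<Rightarrow> real) \<Rightarrow> real \<Rightarrow> real \<Rightarrow> (nat \<Rightarrow> vertex)
                    \<Rightarrow> (nat \<Rightarrow> int) \<Rightarrow> (nat \<Rightarrow> int) \<Rightarrow> real" where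
  "wtGP N a c1 c2 P l1 l2 =
     c1 powi (l1 0 - l2 0) * c2 powi (l1 N - l2 N) *
     (\<Prod>j\<in>{1..N}.
        (lab a P j powi (l1 (up P j) - l1 (low P j)) * ind (l1 (up P j) \<ge> l1 (low P j))) *
        (lab a P j powi (l2 (up P j) - l2 (low P j)) * ind (l2 (up P j) \<ge> l2 (low P j))) *
        ind (l1 (low P j) \<ge> l2 (up P j)))"

definition wtP :: "nat \<Rightarrow> (int \<Rightarrow> real) \<Rightarrow> real \<Rightarrow> real \<Rightarrow> (nat \<Rightarrow> vertex)
                   \<Rightarrow> (nat \<Rightarrow> int) \<Rightarrow> ennreal" where
  "wtP N a c1 c2 P l1 = (\<Sum>\<^sub>\<infinity>l2\<in>Zvec N. ennreal (wtGP N a c1 c2 P l1 l2))"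

definition upright_chain :: "nat \<Rightarrow> vertex list \<Rightarrow> bool" where
  "upright_chain N xs \<longleftrightarrow> (\<forall>v\<in>set xs. in_strip N v) \<and>
     (\<forall>i. Suc i < length xs \<longrightarrow>
        xs ! Suc i = (fst (xs ! i) + 1, snd (xs ! i)) \<or> xs ! Suc i = (fst (xs ! i), snd (xs ! i) + 1))"

definition above :: "nat \<Rightarrow> (nat \<Rightarrow> vertex) \<Rightarrow> vertex \<Rightarrow> bool" where
  "above N P v \<longleftrightarrow> (\<exists>j\<le>N. \<exists>xs. upright_chain N (P j # xs) \<and> last (P j # xs) = v)"

definition path_above :: "nat \<Rightarrow> (nat \<Rightarrow> vertex) \<Rightarrow> (nat \<Rightarrow> vertex) \<Rightarrow> bool" where
  "path_above N P Q \<longleftrightarrow> (\<forall>j\<le>N. above N P (Q j))"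

definition lpp :: "nat \<Rightarrow> (nat \<Rightarrow> vertex) \<Rightarrow> (nat \<Rightarrow> int) \<Rightarrow> (vertex \<Rightarrow> nat) \<Rightarrow> vertex \<Rightarrow> int" where
  "lpp N P lam w v = Max {lam j + (\<Sum>u\<leftarrow>xs. int (w u)) | j xs.
       j \<le> N \<and> upright_chain N (P j # xs) \<and> last (P j # xs) = v \<and>
       (\<forall>u\<in>set xs. u \<notin> P ` {..N})}"

definition qpar :: "nat \<Rightarrow> (int \<Rightarrow> real) \<Rightarrow> real \<Rightarrow> real \<Rightarrow> vertex \<Rightarrow> real" where
  "qpar N a c1 c2 v = (if fst v = snd v then a (snd v) * c1
                       else if fst v = snd v + int N then a (snd v) * c2
                       else a (fst v) * a (snd v))"

(* Geom(q): mass (1-q) q^n on nat *)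
definition Geom :: "real \<Rightarrow> nat pmf" where
  "Geom q = geometric_pmf (1 - q)"

(* finite region of strip vertices that can influence G on Q (all vertices
   coordinatewise below some q_j); weights there are independent *)
definition region :: "nat \<Rightarrow> (nat \<Rightarrow> vertex) \<Rightarrow> vertex set" where
  "region N Q = {v. in_strip N v \<and> (\<exists>j\<le>N. fst v \<le> fst (Q j) \<and> snd v \<le> snd (Q j))}"

definition weights :: "nat \<Rightarrow> (int \<Rightarrow> real) \<Rightarrow> real \<Rightarrow> real \<Rightarrow> (nat \<Rightarrow> vertex) \<Rightarrow> (vertex \<Rightarrow> nat) pmf" where
  "weights N a c1 c2 Q = Pi_pmf (region N Q) 0 (\<lambda>v. Geom (qpar N a c1 c2 v))"

definition U :: "nat \<Rightarrow> (int \<Rightarrow> real) \<Rightarrow> real \<Rightarrow> real \<Rightarrow> (nat \<Rightarrow> vertex) \<Rightarrow> (nat \<Rightarrow> vertex)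
                 \<Rightarrow> (nat \<Rightarrow> int) \<Rightarrow> (nat \<Rightarrow> int) \<Rightarrow> real" where
  "U N a c1 c2 P Q lam' lam =
     measure_pmf.prob (weights N a c1 c2 Q) {w. \<forall>j\<le>N. lpp N P lam w (Q j) = lam' j}"

definition Zc :: "nat \<Rightarrow> (int \<Rightarrow> real) \<Rightarrow> real \<Rightarrow> real \<Rightarrow> (nat \<Rightarrow> vertex) \<Rightarrow> ennreal" where
  "Zc N a c1 c2 P = (\<Sum>\<^sub>\<infinity>L\<in>Lvec N. wtP N a c1 c2 P L)"

(* P^P(L_1), with L_1 encoded as the vector (0, L_1) *)
definition PP :: "nat \<Rightarrow> (int \<Rightarrow> real) \<Rightarrow> real \<Rightarrow> real \<Rightarrow> (nat \<Rightarrow> vertex) \<Rightarrow> (nat \<Rightarrow> int) \<Rightarrow> ennreal" where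
  "PP N a c1 c2 P L = wtP N a c1 c2 P L / Zc N a c1 c2 P"

definition Ub :: "nat \<Rightarrow> (int \<Rightarrow> real) \<Rightarrow> real \<Rightarrow> real \<Rightarrow> (nat \<Rightarrow> vertex) \<Rightarrow> (nat \<Rightarrow> vertex)
                  \<Rightarrow> (nat \<Rightarrow> int) \<Rightarrow> (nat \<Rightarrow> int) \<Rightarrow> ennreal" where
  "Ub N a c1 c2 P Q L' L =
     (\<Sum>\<^sub>\<infinity>x\<in>(UNIV::int set). ennreal (U N a c1 c2 P Q (\<lambda>j. if j \<le> N then L' j + x else 0) L))"

end

theory Submission
  imports Defs
begin


lemma infsum_ennreal_SUP:
  fixes f :: "'a \<Rightarrow> ennreal"
  shows "infsum f A = (SUP F\<in>{F. finite F \<and> F\<subseteq>A}. sum f F)"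
  by (rule nonneg_infsum_complete) simp

lemma infsum_nn_integral:
  fixes f :: "'a \<Rightarrow> ennreal"
  assumes "countable A"
  shows "infsum f A = (\<integral>\<^sup>+x. f x \<partial>count_space A)"
proof (rule antisym)
  show "infsum f A \<le> (\<integral>\<^sup>+x. f x \<partial>count_space A)"
    unfolding infsum_ennreal_SUP
  proof (rule SUP_least)
    fix F assume F: "F \<in> {F. finite F \<and> F \<subseteq> A}"
    have "sum f F = (\<integral>\<^sup>+x. f x \<partial>count_space F)"
      using F by (simp add: nn_integral_count_space_finite)
    also have "\<dots> \<le> (\<integral>\<^sup>+x. f x \<partial>count_space A)"
      using F by (auto simp: nn_integral_count_space_indicator intro!: nn_integral_mono split: split_indicator)
    finally show "sum f F \<le> (\<integral>\<^sup>+x. f x \<partial>count_space A)" .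
  qed
next
  show "(\<integral>\<^sup>+x. f x \<partial>count_space A) \<le> infsum f A"
  proof (cases "finite A")
    case True
    then show ?thesis by (simp add: nn_integral_count_space_finite)
  next
    case False
    note * = bij_betw_from_nat_into[OF assms False]
    have "(\<integral>\<^sup>+x. f x \<partial>count_space A) = (\<integral>\<^sup>+n. f (from_nat_into A n) \<partial>count_space UNIV)"
      by (simp add: nn_integral_bij_count_space[symmetric, OF *])
    also have "\<dots> = (\<Sum>n. f (from_nat_into A n))"
      by (simp add: nn_integral_count_space_nat)
    also have "\<dots> = (SUP n. \<Sum>i<n. f (from_nat_into A i))"
      by (simp add: suminf_eq_SUP)
    also have "\<dots> \<le> infsum f A"
    proof (rule SUP_least)
      fix n
      have inj: "inj_on (from_nat_into A) {..<n}"
        using * by (meson bij_betw_def inj_on_subset subset_UNIV)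
      have "(\<Sum>i<n. f (from_nat_into A i)) = sum f (from_nat_into A ` {..<n})"
        by (simp add: sum.reindex[OF inj])
      also have "\<dots> \<le> infsum f A"
        unfolding infsum_ennreal_SUP
        by (rule SUP_upper) (use * in \<open>auto simp: bij_betw_def\<close>)
      finally show "(\<Sum>i<n. f (from_nat_into A i)) \<le> infsum f A" .
    qed
    finally show ?thesis .
  qed
qed


lemma infsum_swap_ennreal:
  fixes f :: "'a \<Rightarrow> 'b \<Rightarrow> ennreal"
  assumes "countable A" "countable B"
  shows "(\<Sum>\<^sub>\<infinity>x\<in>A. \<Sum>\<^sub>\<infinity>y\<in>B. f x y) = (\<Sum>\<^sub>\<infinity>y\<in>B. \<Sum>\<^sub>\<infinity>x\<in>A. f x y)"
proof -
  have "(\<Sum>\<^sub>\<infinity>x\<in>A. \<Sum>\<^sub>\<infinity>y\<in>B. f x y) = (\<integral>\<^sup>+x. \<integral>\<^sup>+y. f x y \<partial>count_space B \<partial>count_space A)"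
    unfolding infsum_nn_integral[OF assms(1)] infsum_nn_integral[OF assms(2)] ..
  also have "\<dots> = (\<integral>\<^sup>+y. \<integral>\<^sup>+x. f x y \<partial>count_space A \<partial>count_space B)"
    by (rule nn_integral_count_space_nn_integral[OF assms(2)]) simp
  also have "\<dots> = (\<Sum>\<^sub>\<infinity>y\<in>B. \<Sum>\<^sub>\<infinity>x\<in>A. f x y)"
    unfolding infsum_nn_integral[OF assms(1)] infsum_nn_integral[OF assms(2)] ..
  finally show ?thesis .
qed

lemma infsum_nn_integral_swap:
  fixes f :: "'a \<Rightarrow> 'b \<Rightarrow> ennreal"
  assumes "countable A"
  shows "(\<integral>\<^sup>+y. (\<Sum>\<^sub>\<infinity>x\<in>A. f x y) \<partial>measure_pmf p) = (\<Sum>\<^sub>\<infinity>x\<in>A. \<integral>\<^sup>+y. f x y \<partial>measure_pmf p)"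
  unfolding infsum_nn_integral[OF assms]
  by (rule nn_integral_count_space_nn_integral[OF assms]) simp

lemma infsum_cmult_left_ennreal:
  fixes f :: "'a \<Rightarrow> ennreal"
  assumes "countable A"
  shows "(\<Sum>\<^sub>\<infinity>x\<in>A. c * f x) = c * (\<Sum>\<^sub>\<infinity>x\<in>A. f x)"
  unfolding infsum_nn_integral[OF assms]
  by (rule nn_integral_cmult) simp

lemma infsum_cmult_right_ennreal:
  fixes f :: "'a \<Rightarrow> ennreal"
  assumes "countable A"
  shows "(\<Sum>\<^sub>\<infinity>x\<in>A. f x * c) = (\<Sum>\<^sub>\<infinity>x\<in>A. f x) * c"
  using infsum_cmult_left_ennreal[OF assms, of c f] by (simp add: mult.commute)

lemma infsum_Sigma_ennreal:
  fixes f :: "'a \<times> 'b \<Rightarrow> ennreal"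
  assumes "countable A" "countable B"
  shows "(\<Sum>\<^sub>\<infinity>z\<in>A \<times> B. f z) = (\<Sum>\<^sub>\<infinity>x\<in>A. \<Sum>\<^sub>\<infinity>y\<in>B. f (x, y))"
proof -
  interpret sigma_finite_measure "count_space B"
    using assms(2) by (rule sigma_finite_measure_count_space_countable)
  have c: "countable (A \<times> B)" using assms by simp
  have "(\<Sum>\<^sub>\<infinity>z\<in>A \<times> B. f z) = (\<integral>\<^sup>+z. f z \<partial>(count_space A \<Otimes>\<^sub>M count_space B))"
    unfolding infsum_nn_integral[OF c] pair_measure_countable[OF assms] ..
  also have "\<dots> = (\<integral>\<^sup>+x. \<integral>\<^sup>+y. f (x, y) \<partial>count_space B \<partial>count_space A)"
    by (rule nn_integral_fst[symmetric]) (unfold pair_measure_countable[OF assms], simp)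
  also have "\<dots> = (\<Sum>\<^sub>\<infinity>x\<in>A. \<Sum>\<^sub>\<infinity>y\<in>B. f (x, y))"
    unfolding infsum_nn_integral[OF assms(1)] infsum_nn_integral[OF assms(2)] ..
  finally show ?thesis .
qed



definition mk :: "(nat \<Rightarrow> int) \<Rightarrow> nat \<Rightarrow> vertex" where
  "mk h j = (h j + int j, h j)"

definition valid :: "nat \<Rightarrow> (nat \<Rightarrow> int) \<Rightarrow> bool" where
  "valid N h \<longleftrightarrow> (\<forall>j\<le>N. 0 \<le> h j) \<and> (\<forall>j\<in>{1..N}. h j = h (j-1) \<or> h j = h (j-1) - 1)"

lemma down_right_mk:
  assumes "down_right N P" "j \<le> N"
  shows "P j = mk (\<lambda>i. snd (P i)) j"
  using assms(2)
proof (induction j)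
  case 0
  then show ?case using assms(1) unfolding down_right_def mk_def
    by (metis add.right_neutral of_nat_0 prod.collapse)
next
  case (Suc j)
  then have IH: "P j = mk (\<lambda>i. snd (P i)) j" by simp
  have "P (Suc j) = (fst (P j) + 1, snd (P j)) \<or> P (Suc j) = (fst (P j), snd (P j) - 1)"
  proof -
    have "Suc j \<in> {1..N}" using Suc.prems by simp
    then have "P (Suc j) = (fst (P (Suc j - 1)) + 1, snd (P (Suc j - 1))) \<or> P (Suc j) = (fst (P (Suc j - 1)), snd (P (Suc j - 1)) - 1)"
      using assms(1) unfolding down_right_def by blast
    then show ?thesis by simp
  qed
  moreover have fj: "fst (P j) = snd (P j) + int j" using IH unfolding mk_def by (metis fst_conv)
  ultimately show ?case unfolding mk_def by auto
qed

lemma down_right_valid: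
  assumes "down_right N P"
  shows "valid N (\<lambda>i. snd (P i))"
  unfolding valid_def
proof (intro conjI ballI allI impI)
  fix j assume "j \<le> N"
  then have "in_strip N (P j)" using assms unfolding down_right_def by blast
  then show "0 \<le> snd (P j)" unfolding in_strip_def by simp
next
  fix j assume j: "j \<in> {1..N}"
  then have "P j = (fst (P (j-1)) + 1, snd (P (j-1))) \<or> P j = (fst (P (j-1)), snd (P (j-1)) - 1)"
    using assms unfolding down_right_def by auto
  then show "snd (P j) = snd (P (j - 1)) \<or> snd (P j) = snd (P (j - 1)) - 1" by auto
qed

lemma in_strip_mk:
  assumes "valid N h" "j \<le> N"
  shows "in_strip N (mk h j)"
proof -
  have "0 \<le> h j" using assms unfolding valid_def by blast
  then show ?thesis using assms(2) unfolding in_strip_def mk_def by simp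
qed

lemma mk_inj:
  assumes "mk h i = mk h' k"
  shows "i = k"
  using assms unfolding mk_def by auto

lemma valid_down_right:
  assumes "valid N h"
  shows "down_right N (mk h)"
  unfolding down_right_def
proof (intro conjI ballI allI impI)
  show "fst (mk h 0) = snd (mk h 0)" by (simp add: mk_def)
next
  fix j assume "j \<le> N" then show "in_strip N (mk h j)" using in_strip_mk assms by blast
next
  fix j assume j: "j \<in> {1..N}"
  then have e: "int (j - 1) = int j - 1" by auto
  have "h j = h (j-1) \<or> h j = h (j-1) - 1" using assms j unfolding valid_def by blast
  then show "mk h j = (fst (mk h (j - 1)) + 1, snd (mk h (j - 1))) \<or>
             mk h j = (fst (mk h (j - 1)), snd (mk h (j - 1)) - 1)"
    unfolding mk_def e by auto
qed

lemma horiz_mk: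
  assumes "j \<ge> 1"
  shows "horiz (mk h) j \<longleftrightarrow> h j = h (j-1)"
proof -
  have e: "int (j - 1) = int j - 1" using assms by auto
  show ?thesis unfolding horiz_def mk_def e by auto
qed

definition S :: "nat \<Rightarrow> (nat \<Rightarrow> vertex) \<Rightarrow> (nat \<Rightarrow> int) \<Rightarrow> (vertex \<Rightarrow> nat) \<Rightarrow> vertex \<Rightarrow> int set" where
  "S N P lam w v = {lam j + (\<Sum>u\<leftarrow>xs. int (w u)) | j xs.
       j \<le> N \<and> upright_chain N (P j # xs) \<and> last (P j # xs) = v \<and>
       (\<forall>u\<in>set xs. u \<notin> P ` {..N})}"

lemma lpp_S: "lpp N P lam w v = Max (S N P lam w v)"
  unfolding lpp_def S_def ..

definition stp :: "vertex \<Rightarrow> vertex \<Rightarrow> bool" where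
  "stp u v \<longleftrightarrow> v = (fst u + 1, snd u) \<or> v = (fst u, snd u + 1)"

lemma upright_chain_snoc:
  assumes "ys \<noteq> []"
  shows "upright_chain N (ys @ [v]) \<longleftrightarrow> upright_chain N ys \<and> in_strip N v \<and> stp (last ys) v"
proof -
  have L: "last ys = ys ! (length ys - 1)" using assms by (simp add: last_conv_nth)
  show ?thesis
  proof
    assume A: "upright_chain N (ys @ [v])"
    have 1: "upright_chain N ys"
      unfolding upright_chain_def
    proof (intro conjI allI impI ballI)
      fix u assume "u \<in> set ys" then show "in_strip N u" using A unfolding upright_chain_def by auto
    next
      fix i assume i: "Suc i < length ys"
      have "(ys @ [v]) ! Suc i = (fst ((ys @ [v]) ! i) + 1, snd ((ys @ [v]) ! i)) \<or>
            (ys @ [v]) ! Suc i = (fst ((ys @ [v]) ! i), snd ((ys @ [v]) ! i) + 1)"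
        using A i unfolding upright_chain_def by auto
      then show "ys ! Suc i = (fst (ys ! i) + 1, snd (ys ! i)) \<or> ys ! Suc i = (fst (ys ! i), snd (ys ! i) + 1)"
        using i by (simp add: nth_append)
    qed
    have 2: "in_strip N v" using A unfolding upright_chain_def by auto
    obtain k where k: "length ys = Suc k" using assms by (cases ys) auto
    have "Suc k < length (ys @ [v])" using k by simp
    then have "(ys @ [v]) ! Suc k = (fst ((ys @ [v]) ! k) + 1, snd ((ys @ [v]) ! k)) \<or>
          (ys @ [v]) ! Suc k = (fst ((ys @ [v]) ! k), snd ((ys @ [v]) ! k) + 1)"
      using A unfolding upright_chain_def by blast
    moreover have "(ys @ [v]) ! Suc k = v" using k by (metis nth_append_length)
    moreover have "(ys @ [v]) ! k = last ys" using k assms by (simp add: nth_append last_conv_nth)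
    ultimately have 3: "stp (last ys) v" unfolding stp_def by simp
    show "upright_chain N ys \<and> in_strip N v \<and> stp (last ys) v" using 1 2 3 by blast
  next
    assume A: "upright_chain N ys \<and> in_strip N v \<and> stp (last ys) v"
    show "upright_chain N (ys @ [v])"
      unfolding upright_chain_def
    proof (intro conjI allI impI ballI)
      fix u assume "u \<in> set (ys @ [v])" then show "in_strip N u" using A unfolding upright_chain_def by auto
    next
      fix i assume i: "Suc i < length (ys @ [v])"
      show "(ys @ [v]) ! Suc i = (fst ((ys @ [v]) ! i) + 1, snd ((ys @ [v]) ! i)) \<or>
            (ys @ [v]) ! Suc i = (fst ((ys @ [v]) ! i), snd ((ys @ [v]) ! i) + 1)"
      proof (cases "Suc i < length ys")
        case True
        then show ?thesis using A unfolding upright_chain_def by (simp add: nth_append)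
      next
        case False
        then have "i = length ys - 1" "Suc i = length ys" using i by auto
        then show ?thesis using A assms unfolding stp_def L by (simp add: nth_append)
      qed
    qed
  qed
qed

lemma upright_chain_hd: "upright_chain N (x # xs) \<Longrightarrow> in_strip N x"
  unfolding upright_chain_def by auto

lemma upright_chain_single: "upright_chain N [x] \<longleftrightarrow> in_strip N x"
  unfolding upright_chain_def by auto

lemma S_not_strip:
  assumes "\<not> in_strip N v"
  shows "S N P lam w v = {}"
proof -
  { fix j xs assume "upright_chain N (P j # xs)" "last (P j # xs) = v"
    then have "in_strip N v" unfolding upright_chain_def by (metis last_in_set list.distinct(1)) }
  then show ?thesis using assms unfolding S_def by blast
qed

lemma S_on_P:
  assumes inj: "\<And>i k. i \<le> N \<Longrightarrow> k \<le> N \<Longrightarrow> P i = P k \<Longrightarrow> i = k"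
    and strip: "\<And>i. i \<le> N \<Longrightarrow> in_strip N (P i)"
    and k: "k \<le> N"
  shows "S N P lam w (P k) = {lam k}"
proof
  show "{lam k} \<subseteq> S N P lam w (P k)"
    unfolding S_def using k strip[OF k]
    by (auto intro!: exI[of _ k] exI[of _ "[]"] simp: upright_chain_single)
next
  show "S N P lam w (P k) \<subseteq> {lam k}"
  proof
    fix s assume "s \<in> S N P lam w (P k)"
    then obtain j xs where s: "s = lam j + (\<Sum>u\<leftarrow>xs. int (w u))" and j: "j \<le> N"
      and c: "upright_chain N (P j # xs)" and l: "last (P j # xs) = P k"
      and av: "\<forall>u\<in>set xs. u \<notin> P ` {..N}"
      unfolding S_def by blast
    have "xs = []"
    proof (rule ccontr)
      assume "xs \<noteq> []"
      then have "last xs = P k" using l by simp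
      moreover have "last xs \<in> set xs" using \<open>xs \<noteq> []\<close> by (rule last_in_set)
      ultimately show False using av k by auto
    qed
    then show "s \<in> {lam k}" using s l inj[OF j k] by simp
  qed
qed

lemma S_decomp:
  assumes v: "in_strip N v" "v \<notin> P ` {..N}"
  shows "S N P lam w v = (\<lambda>s. s + int (w v)) ` (S N P lam w (fst v - 1, snd v) \<union> S N P lam w (fst v, snd v - 1))"
proof
  show "S N P lam w v \<subseteq> (\<lambda>s. s + int (w v)) ` (S N P lam w (fst v - 1, snd v) \<union> S N P lam w (fst v, snd v - 1))"
  proof
    fix s assume "s \<in> S N P lam w v"
    then obtain j xs where s: "s = lam j + (\<Sum>u\<leftarrow>xs. int (w u))" and j: "j \<le> N"
      and c: "upright_chain N (P j # xs)" and l: "last (P j # xs) = v"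
      and av: "\<forall>u\<in>set xs. u \<notin> P ` {..N}"
      unfolding S_def by blast
    have "xs \<noteq> []" using l v j by auto
    then obtain ys where ys: "xs = ys @ [v]" using l
      by (metis append_butlast_last_id last_ConsR)
    have c2: "upright_chain N ((P j # ys) @ [v])" using c ys by simp
    then have c3: "upright_chain N (P j # ys)" and st: "stp (last (P j # ys)) v"
      using upright_chain_snoc[of "P j # ys"] by auto
    let ?u = "last (P j # ys)"
    have "?u = (fst v - 1, snd v) \<or> ?u = (fst v, snd v - 1)"
      using st unfolding stp_def by auto
    moreover have "lam j + (\<Sum>u\<leftarrow>ys. int (w u)) \<in> S N P lam w ?u"
      unfolding S_def using j c3 av ys by auto
    moreover have "s = lam j + (\<Sum>u\<leftarrow>ys. int (w u)) + int (w v)" using s ys by simp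
    ultimately show "s \<in> (\<lambda>s. s + int (w v)) ` (S N P lam w (fst v - 1, snd v) \<union> S N P lam w (fst v, snd v - 1))"
      by auto
  qed
next
  show "(\<lambda>s. s + int (w v)) ` (S N P lam w (fst v - 1, snd v) \<union> S N P lam w (fst v, snd v - 1)) \<subseteq> S N P lam w v"
  proof
    fix s assume "s \<in> (\<lambda>s. s + int (w v)) ` (S N P lam w (fst v - 1, snd v) \<union> S N P lam w (fst v, snd v - 1))"
    then obtain u t where u: "u = (fst v - 1, snd v) \<or> u = (fst v, snd v - 1)" and t: "t \<in> S N P lam w u"
      and s: "s = t + int (w v)" by auto
    from t obtain j ys where t': "t = lam j + (\<Sum>u\<leftarrow>ys. int (w u))" and j: "j \<le> N"
      and c: "upright_chain N (P j # ys)" and l: "last (P j # ys) = u"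
      and av: "\<forall>u\<in>set ys. u \<notin> P ` {..N}"
      unfolding S_def by blast
    have "stp (last (P j # ys)) v" using l u unfolding stp_def by auto
    then have "upright_chain N ((P j # ys) @ [v])"
      using upright_chain_snoc[of "P j # ys"] c v by auto
    then show "s \<in> S N P lam w v"
    proof -
      have "\<forall>u\<in>set (ys @ [v]). u \<notin> P ` {..N}" using av v by auto
      moreover have "last (P j # ys @ [v]) = v" by simp
      moreover have "s = lam j + (\<Sum>u\<leftarrow>ys @ [v]. int (w u))" using s t' by simp
      ultimately have "\<exists>j' xs. s = lam j' + (\<Sum>u\<leftarrow>xs. int (w u)) \<and> j' \<le> N \<and> upright_chain N (P j' # xs) \<and> last (P j' # xs) = v \<and> (\<forall>u\<in>set xs. u \<notin> P ` {..N})"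
        using j \<open>upright_chain N ((P j # ys) @ [v])\<close>
        by (intro exI[of _ j] exI[of _ "ys @ [v]"]) simp
      then show ?thesis unfolding S_def by blast
    qed
  qed
qed

lemma S_finite:
  assumes inj: "\<And>i k. i \<le> N \<Longrightarrow> k \<le> N \<Longrightarrow> P i = P k \<Longrightarrow> i = k"
    and strip: "\<And>i. i \<le> N \<Longrightarrow> in_strip N (P i)"
  shows "finite (S N P lam w v)"
proof (induction "nat (fst v + snd v)" arbitrary: v rule: less_induct)
  case less
  show ?case
  proof (cases "in_strip N v")
    case False
    then show ?thesis by (simp add: S_not_strip)
  next
    case True
    show ?thesis
    proof (cases "v \<in> P ` {..N}")
      case True
      then obtain k where k: "k \<le> N" "v = P k" by blast
      have "S N P lam w (P k) = {lam k}" by (rule S_on_P[OF inj strip k(1)])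
      then show ?thesis using k(2) by simp
    next
      case False
      have fin: "finite (S N P lam w u)" if u: "u = (fst v - 1, snd v) \<or> u = (fst v, snd v - 1)" for u
      proof (cases "in_strip N u")
        case False
        then show ?thesis by (simp add: S_not_strip)
      next
        case True
        then have "0 \<le> fst u + snd u" unfolding in_strip_def by simp
        moreover have "fst u + snd u < fst v + snd v" using u by auto
        ultimately have "nat (fst u + snd u) < nat (fst v + snd v)"
          by (simp add: zless_nat_conj)
        then show ?thesis using less by blast
      qed
      have "finite (S N P lam w (fst v - 1, snd v))" by (rule fin) simp
      moreover have "finite (S N P lam w (fst v, snd v - 1))" by (rule fin) simp
      ultimately show ?thesis
        unfolding S_decomp[OF \<open>in_strip N v\<close> False] by blast
    qed
  qed
qed

lemma lpp_rec:
  assumes inj: "\<And>i k. i \<le> N \<Longrightarrow> k \<le> N \<Longrightarrow> P i = P k \<Longrightarrow> i = k"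
    and strip: "\<And>i. i \<le> N \<Longrightarrow> in_strip N (P i)"
    and v: "in_strip N v" "v \<notin> P ` {..N}"
    and ne: "S N P lam w (fst v - 1, snd v) \<union> S N P lam w (fst v, snd v - 1) \<noteq> {}"
  shows "lpp N P lam w v = Max (S N P lam w (fst v - 1, snd v) \<union> S N P lam w (fst v, snd v - 1)) + int (w v)"
proof -
  let ?A = "S N P lam w (fst v - 1, snd v) \<union> S N P lam w (fst v, snd v - 1)"
  have f: "finite (S N P lam w u)" for u
  proof (rule S_finite)
    fix i k assume "i \<le> N" "k \<le> N" "P i = P k" then show "i = k" by (rule inj)
  next
    fix i assume "i \<le> N" then show "in_strip N (P i)" by (rule strip)
  qed
  have fin: "finite ?A" using f by blast
  have "lpp N P lam w v = Max ((\<lambda>s. s + int (w v)) ` ?A)"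
    unfolding lpp_S S_decomp[OF v] ..
  also have "\<dots> = Max ?A + int (w v)"
    by (rule mono_Max_commute[symmetric, OF _ fin ne]) (simp add: mono_def)
  finally show ?thesis .
qed



lemma infsum_single':
  fixes f :: "'a \<Rightarrow> 'b::{comm_monoid_add,t2_space}"
  assumes "a \<in> A" "\<And>x. x \<in> A \<Longrightarrow> x \<noteq> a \<Longrightarrow> f x = 0"
  shows "infsum f A = f a"
proof -
  have "infsum f A = infsum f {a}"
    by (rule infsum_cong_neutral) (use assms in auto)
  then show ?thesis by simp
qed

definition gp :: "nat pmf \<Rightarrow> int \<Rightarrow> ennreal" where
  "gp q d = (if 0 \<le> d then ennreal (pmf q (nat d)) else 0)"

lemma emeasure_Pi_pmf_split:
  fixes p :: "'v \<Rightarrow> nat pmf"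
  assumes "finite R" "v \<in> R"
  shows "emeasure (measure_pmf (Pi_pmf R 0 p)) E =
    (\<integral>\<^sup>+y. \<integral>\<^sup>+f. indicator E (f(v := y)) \<partial>measure_pmf (Pi_pmf (R - {v}) 0 p) \<partial>measure_pmf (p v))"
proof -
  have R: "R = insert v (R - {v})" using assms by auto
  have "Pi_pmf R 0 p = map_pmf (\<lambda>(y,f). f(v:=y)) (pair_pmf (p v) (Pi_pmf (R - {v}) 0 p))"
    by (subst R, rule Pi_pmf_insert) (use assms in auto)
  then have "emeasure (measure_pmf (Pi_pmf R 0 p)) E =
     (\<integral>\<^sup>+x. indicator E x \<partial>measure_pmf (map_pmf (\<lambda>(y,f). f(v:=y)) (pair_pmf (p v) (Pi_pmf (R - {v}) 0 p))))"
    by (metis nn_integral_indicator sets_measure_pmf UNIV_I)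
  also have "\<dots> = (\<integral>\<^sup>+z. indicator E ((\<lambda>(y,f). f(v:=y)) z) \<partial>measure_pmf (pair_pmf (p v) (Pi_pmf (R - {v}) 0 p)))"
    by (rule nn_integral_map_pmf)
  also have "\<dots> = (\<integral>\<^sup>+y. \<integral>\<^sup>+f. indicator E (f(v := y)) \<partial>measure_pmf (Pi_pmf (R - {v}) 0 p) \<partial>measure_pmf (p v))"
    by (subst nn_integral_pair_pmf') simp
  finally show ?thesis .
qed

lemma kernel_step:
  fixes R :: "'v set" and p :: "'v \<Rightarrow> nat pmf" and \<Phi> :: "('v \<Rightarrow> nat) \<Rightarrow> nat \<Rightarrow> int"
    and F :: "(nat \<Rightarrow> int) \<Rightarrow> int"
  assumes R: "finite R" "v \<in> R" and indep: "\<And>w t. \<Phi> (w(v := t)) = \<Phi> w"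
  shows "emeasure (measure_pmf (Pi_pmf R 0 p)) {w. (\<Phi> w)(j := F (\<Phi> w) + int (w v)) = \<mu>'} =
     (\<Sum>\<^sub>\<infinity>x\<in>UNIV. emeasure (measure_pmf (Pi_pmf R 0 p)) {w. \<Phi> w = \<mu>'(j := x)} * gp (p v) (\<mu>' j - F (\<mu>'(j := x))))"
proof -
  let ?M = "measure_pmf (Pi_pmf (R - {v}) 0 p)"
  let ?c = "\<lambda>x. \<mu>' j - F (\<mu>'(j := x))"
  have pt: "indicator {w. (\<Phi> w)(j := F (\<Phi> w) + int (w v)) = \<mu>'} (f(v := y)) =
        (\<Sum>\<^sub>\<infinity>x\<in>UNIV. indicator {u. \<Phi> u = \<mu>'(j := x)} f * (indicator {y. int y = ?c x} y :: ennreal))"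
    for f and y :: nat
  proof -
    have e: "\<Phi> (f(v := y)) = \<Phi> f" by (rule indep)
    define g where "g = (\<lambda>x. indicator {u. \<Phi> u = \<mu>'(j := x)} f * (indicator {y. int y = ?c x} y :: ennreal))"
    have G: "infsum g UNIV = g (\<Phi> f j)"
    proof (rule infsum_single')
      show "\<Phi> f j \<in> UNIV" by simp
    next
      fix x assume "x \<in> UNIV" "x \<noteq> \<Phi> f j"
      then have "\<Phi> f \<noteq> \<mu>'(j := x)" by auto
      then show "g x = 0" unfolding g_def by simp
    qed
    have "(\<Sum>\<^sub>\<infinity>x\<in>UNIV. indicator {u. \<Phi> u = \<mu>'(j := x)} f * (indicator {y. int y = ?c x} y :: ennreal)) =
          indicator {u. \<Phi> u = \<mu>'(j := \<Phi> f j)} f * (indicator {y. int y = ?c (\<Phi> f j)} y :: ennreal)"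
      using G unfolding g_def by simp
    also have "\<dots> = indicator {w. (\<Phi> w)(j := F (\<Phi> w) + int (w v)) = \<mu>'} (f(v := y))"
    proof (cases "\<Phi> f = \<mu>'(j := \<Phi> f j)")
      case True
      have "(\<Phi> f)(j := F (\<Phi> f) + int y) = \<mu>' \<longleftrightarrow> int y = ?c (\<Phi> f j)"
      proof
        assume A: "(\<Phi> f)(j := F (\<Phi> f) + int y) = \<mu>'"
        then have "\<mu>' j = F (\<Phi> f) + int y" by (metis fun_upd_same)
        then show "int y = ?c (\<Phi> f j)" using True by simp
      next
        assume "int y = ?c (\<Phi> f j)"
        then have "\<mu>' j = F (\<Phi> f) + int y" using True by simp
        then show "(\<Phi> f)(j := F (\<Phi> f) + int y) = \<mu>'"
          using True by (metis fun_upd_triv fun_upd_upd)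
      qed
      then show ?thesis using True e by (simp add: indicator_def)
    next
      case False
      have "(\<Phi> f)(j := F (\<Phi> f) + int y) \<noteq> \<mu>'"
      proof
        assume "(\<Phi> f)(j := F (\<Phi> f) + int y) = \<mu>'"
        then have "\<Phi> f = \<mu>'(j := \<Phi> f j)" by (metis fun_upd_triv fun_upd_upd)
        then show False using False by simp
      qed
      then show ?thesis using False e by (simp add: indicator_def)
    qed
    finally show ?thesis by simp
  qed
  have "emeasure (measure_pmf (Pi_pmf R 0 p)) {w. (\<Phi> w)(j := F (\<Phi> w) + int (w v)) = \<mu>'} =
      (\<integral>\<^sup>+y. \<integral>\<^sup>+f. (\<Sum>\<^sub>\<infinity>x\<in>UNIV. indicator {u. \<Phi> u = \<mu>'(j := x)} f * (indicator {y. int y = ?c x} y :: ennreal)) \<partial>?M \<partial>measure_pmf (p v))"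
    unfolding emeasure_Pi_pmf_split[OF R] pt ..
  also have "\<dots> = (\<integral>\<^sup>+y. (\<Sum>\<^sub>\<infinity>x\<in>UNIV. \<integral>\<^sup>+f. indicator {u. \<Phi> u = \<mu>'(j := x)} f * (indicator {y. int y = ?c x} y :: ennreal) \<partial>?M) \<partial>measure_pmf (p v))"
    by (subst infsum_nn_integral_swap) simp_all
  also have "\<dots> = (\<Sum>\<^sub>\<infinity>x\<in>UNIV. \<integral>\<^sup>+y. \<integral>\<^sup>+f. indicator {u. \<Phi> u = \<mu>'(j := x)} f * (indicator {y. int y = ?c x} y :: ennreal) \<partial>?M \<partial>measure_pmf (p v))"
    by (subst infsum_nn_integral_swap) simp_all
  also have "\<dots> = (\<Sum>\<^sub>\<infinity>x\<in>UNIV. emeasure (measure_pmf (Pi_pmf R 0 p)) {w. \<Phi> w = \<mu>'(j := x)} * gp (p v) (?c x))"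
  proof (rule infsum_cong)
    fix x
    have m1: "emeasure (measure_pmf (Pi_pmf R 0 p)) {w. \<Phi> w = \<mu>'(j := x)} = (\<integral>\<^sup>+f. indicator {u. \<Phi> u = \<mu>'(j := x)} f \<partial>?M)"
    proof -
      have "emeasure (measure_pmf (Pi_pmf R 0 p)) {w. \<Phi> w = \<mu>'(j := x)} =
         (\<integral>\<^sup>+y. \<integral>\<^sup>+f. indicator {w. \<Phi> w = \<mu>'(j := x)} (f(v := y)) \<partial>?M \<partial>measure_pmf (p v))"
        by (rule emeasure_Pi_pmf_split[OF R])
      also have "\<dots> = (\<integral>\<^sup>+y. \<integral>\<^sup>+f. indicator {u. \<Phi> u = \<mu>'(j := x)} f \<partial>?M \<partial>measure_pmf (p v))"
        by (simp add: indep indicator_def)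
      also have "\<dots> = (\<integral>\<^sup>+f. indicator {u. \<Phi> u = \<mu>'(j := x)} f \<partial>?M)"
        by (simp add: measure_pmf.emeasure_space_1)
      finally show ?thesis .
    qed
    have m2: "(\<integral>\<^sup>+y. (indicator {y. int y = ?c x} y :: ennreal) \<partial>measure_pmf (p v)) = gp (p v) (?c x)"
    proof (cases "0 \<le> ?c x")
      case True
      then have "{y. int y = ?c x} = {nat (?c x)}" by auto
      then show ?thesis using True by (simp add: gp_def emeasure_pmf_single)
    next
      case False
      then have "{y. int y = ?c x} = {}" by auto
      then show ?thesis using False by (simp add: gp_def)
    qed
    have "(\<integral>\<^sup>+y. \<integral>\<^sup>+f. indicator {u. \<Phi> u = \<mu>'(j := x)} f * (indicator {y. int y = ?c x} y :: ennreal) \<partial>?M \<partial>measure_pmf (p v))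
       = (\<integral>\<^sup>+y. (\<integral>\<^sup>+f. indicator {u. \<Phi> u = \<mu>'(j := x)} f \<partial>?M) * (indicator {y. int y = ?c x} y :: ennreal) \<partial>measure_pmf (p v))"
      by (subst nn_integral_multc) simp_all
    also have "\<dots> = (\<integral>\<^sup>+f. indicator {u. \<Phi> u = \<mu>'(j := x)} f \<partial>?M) * (\<integral>\<^sup>+y. (indicator {y. int y = ?c x} y :: ennreal) \<partial>measure_pmf (p v))"
      by (subst nn_integral_cmult) simp_all
    finally show "(\<integral>\<^sup>+y. \<integral>\<^sup>+f. indicator {u. \<Phi> u = \<mu>'(j := x)} f * (indicator {y. int y = ?c x} y :: ennreal) \<partial>?M \<partial>measure_pmf (p v))
       = emeasure (measure_pmf (Pi_pmf R 0 p)) {w. \<Phi> w = \<mu>'(j := x)} * gp (p v) (?c x)"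
      using m1 m2 by simp
  qed
  finally show ?thesis .
qed



lemma ind_T[simp]: "ind True = 1" and ind_F[simp]: "ind False = 0" and ind_nonneg[simp]: "0 \<le> ind b"
  by (auto simp: ind_def)

lemma gp_Geom:
  assumes "0 < q" "q < 1" "0 \<le> d"
  shows "gp (Geom q) d = ennreal ((1 - q) * q powi d)"
proof -
  have "d = int (nat d)" using assms by simp
  then have "q powi d = q ^ nat d" by (metis power_int_of_nat)
  then show ?thesis using assms unfolding gp_def Geom_def by (simp add: mult.commute)
qed

lemma gp_neg: "d < 0 \<Longrightarrow> gp q d = 0"
  by (simp add: gp_def)

lemma infsum_nat_ennreal:
  fixes f :: "nat \<Rightarrow> ennreal"
  shows "(\<Sum>\<^sub>\<infinity>k\<in>UNIV. f k) = suminf f"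
  by (simp add: infsum_nn_integral nn_integral_count_space_nat)

lemma geo_tail:
  fixes r :: real and m :: int
  assumes "0 \<le> r" "r < 1"
  shows "(\<Sum>\<^sub>\<infinity>s\<in>UNIV. ennreal (ind (s \<le> m) * r powi (m - s))) = ennreal (1 / (1 - r))"
proof -
  have "(\<Sum>\<^sub>\<infinity>s\<in>UNIV. ennreal (ind (s \<le> m) * r powi (m - s))) = (\<Sum>\<^sub>\<infinity>s\<in>{s. s \<le> m}. ennreal (r powi (m - s)))"
    by (rule infsum_cong_neutral) (auto simp: ind_def)
  also have bij: "bij_betw (\<lambda>k::nat. m - int k) UNIV {s. s \<le> m}"
    by (rule bij_betwI[where g="\<lambda>s. nat (m - s)"]) auto
  have "(\<Sum>\<^sub>\<infinity>s\<in>{s. s \<le> m}. ennreal (r powi (m - s))) = (\<Sum>\<^sub>\<infinity>k\<in>UNIV. ennreal (r powi (m - (m - int k))))"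
    using infsum_reindex_bij_betw[OF bij, of "\<lambda>s. ennreal (r powi (m - s))"] by simp
  also have "\<dots> = (\<Sum>\<^sub>\<infinity>k\<in>UNIV. ennreal (r ^ k))" by simp
  also have "\<dots> = (\<Sum>k. ennreal (r ^ k))" by (rule infsum_nat_ennreal)
  also have "\<dots> = ennreal (1 / (1 - r))"
    by (rule suminf_ennreal_eq) (use assms in \<open>auto intro: geometric_sums\<close>)
  finally show ?thesis .
qed

lemma infsum_interval:
  fixes f :: "int \<Rightarrow> real"
  assumes "\<And>x. M \<le> x \<Longrightarrow> x \<le> m \<Longrightarrow> 0 \<le> f x"
  shows "(\<Sum>\<^sub>\<infinity>x\<in>UNIV. ennreal (ind (M \<le> x \<and> x \<le> m) * f x)) = ennreal (\<Sum>x\<in>{M..m}. f x)"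
proof -
  have "(\<Sum>\<^sub>\<infinity>x\<in>UNIV. ennreal (ind (M \<le> x \<and> x \<le> m) * f x)) = (\<Sum>\<^sub>\<infinity>x\<in>{M..m}. ennreal (ind (M \<le> x \<and> x \<le> m) * f x))"
    by (rule infsum_cong_neutral) (auto simp: ind_def)
  also have "\<dots> = (\<Sum>x\<in>{M..m}. ennreal (f x))" by (simp add: ind_def)
  also have "\<dots> = ennreal (\<Sum>x\<in>{M..m}. f x)" by (rule sum_ennreal) (use assms in auto)
  finally show ?thesis .
qed

lemma infsum_prod_sep:
  fixes A B :: "int \<Rightarrow> real"
  assumes "\<And>x. 0 \<le> A x" "\<And>s. 0 \<le> B s"
  shows "(\<Sum>\<^sub>\<infinity>s\<in>UNIV. \<Sum>\<^sub>\<infinity>x\<in>UNIV. ennreal (A x * B s)) = (\<Sum>\<^sub>\<infinity>x\<in>UNIV. ennreal (A x)) * (\<Sum>\<^sub>\<infinity>s\<in>UNIV. ennreal (B s))"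
proof -
  have "(\<Sum>\<^sub>\<infinity>s\<in>UNIV. \<Sum>\<^sub>\<infinity>x\<in>UNIV. ennreal (A x * B s)) = (\<Sum>\<^sub>\<infinity>s\<in>UNIV. \<Sum>\<^sub>\<infinity>x\<in>UNIV. ennreal (A x) * ennreal (B s))"
    using assms by (simp add: ennreal_mult)
  also have "\<dots> = (\<Sum>\<^sub>\<infinity>s\<in>UNIV. (\<Sum>\<^sub>\<infinity>x\<in>UNIV. ennreal (A x)) * ennreal (B s))"
    by (subst infsum_cmult_right_ennreal) simp_all
  also have "\<dots> = (\<Sum>\<^sub>\<infinity>x\<in>UNIV. ennreal (A x)) * (\<Sum>\<^sub>\<infinity>s\<in>UNIV. ennreal (B s))"
    by (subst infsum_cmult_left_ennreal) simp_all
  finally show ?thesis .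
qed

lemma infsum_cmult_ennreal_real:
  fixes g :: "int \<Rightarrow> real"
  assumes "0 \<le> K" "\<And>s. 0 \<le> g s"
  shows "(\<Sum>\<^sub>\<infinity>s\<in>UNIV. ennreal (K * g s)) = ennreal K * (\<Sum>\<^sub>\<infinity>s\<in>UNIV. ennreal (g s))"
proof -
  have "(\<Sum>\<^sub>\<infinity>s\<in>UNIV. ennreal (K * g s)) = (\<Sum>\<^sub>\<infinity>s\<in>UNIV. ennreal K * ennreal (g s))"
    using assms by (simp add: ennreal_mult)
  also have "\<dots> = ennreal K * (\<Sum>\<^sub>\<infinity>s\<in>UNIV. ennreal (g s))"
    by (subst infsum_cmult_left_ennreal) simp_all
  finally show ?thesis .
qed

lemma ennreal_mult4:
  fixes a b c d :: real
  assumes "0 \<le> a" "0 \<le> b" "0 \<le> c" "0 \<le> d"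
  shows "ennreal a * (ennreal b * (ennreal c * ennreal d)) = ennreal (a * (b * (c * d)))"
  using assms by (simp add: ennreal_mult mult_nonneg_nonneg)

lemma powi3: "(x::real) \<noteq> 0 \<Longrightarrow> x powi a * x powi b * x powi c = x powi (a + b + c)"
  by (simp add: power_int_add)

lemma bulk_scalar:
  fixes \<alpha> \<beta> :: real and X Y u v z :: int
  assumes a: "0 < \<alpha>" "0 < \<beta>" "\<alpha> * \<beta> < 1"
  shows "gp (Geom (\<beta> * \<alpha>)) (z - max X Y) *
     (\<Sum>\<^sub>\<infinity>s\<in>UNIV. \<Sum>\<^sub>\<infinity>x\<in>UNIV. ennreal (((\<alpha> powi (X - x) * ind (x \<le> X)) * (\<alpha> powi (u - s) * ind (s \<le> u)) * ind (u \<le> x)) *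
                                     ((\<beta> powi (Y - x) * ind (x \<le> Y)) * (\<beta> powi (v - s) * ind (s \<le> v)) * ind (v \<le> x))))
   = (\<Sum>\<^sub>\<infinity>s\<in>UNIV. ennreal (((\<beta> powi (z - X) * ind (X \<le> z)) * (\<beta> powi (s - u) * ind (u \<le> s)) * ind (s \<le> X)) *
                          ((\<alpha> powi (z - Y) * ind (Y \<le> z)) * (\<alpha> powi (s - v) * ind (v \<le> s)) * ind (s \<le> Y))))"
    (is "?L = ?R")
proof (cases "z < max X Y")
  case True
  have "?R = 0"
  proof (rule infsum_0)
    fix s
    show "ennreal (((\<beta> powi (z - X) * ind (X \<le> z)) * (\<beta> powi (s - u) * ind (u \<le> s)) * ind (s \<le> X)) *
                          ((\<alpha> powi (z - Y) * ind (Y \<le> z)) * (\<alpha> powi (s - v) * ind (v \<le> s)) * ind (s \<le> Y))) = 0"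
      using True by (cases "X \<le> z") (auto simp: max_def split: if_splits)
  qed
  moreover have "?L = 0" using True by (simp add: gp_neg)
  ultimately show ?thesis by simp
next
  case False
  define M where "M = max u v"
  define m' where "m' = min X Y"
  define mn where "mn = min u v"
  define mx where "mx = max X Y"
  define r where "r = \<alpha> * \<beta>"
  have r: "0 < r" "r < 1" using a by (auto simp: r_def)
  have z: "mx \<le> z" using False by (auto simp: mx_def max_def)
  have Mmn: "M + mn = u + v" by (simp add: M_def mn_def max_def min_def)
  have mmx: "m' + mx = X + Y" by (simp add: m'_def mx_def max_def min_def)
  let ?A = "\<lambda>x. ind (M \<le> x \<and> x \<le> m') * (\<alpha> powi (X - x) * \<beta> powi (Y - x))"
  let ?K = "\<alpha> powi (u - mn) * \<beta> powi (v - mn)"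
  let ?B = "\<lambda>s. ?K * (ind (s \<le> mn) * r powi (mn - s))"
  have LA: "(((\<alpha> powi (X - x) * ind (x \<le> X)) * (\<alpha> powi (u - s) * ind (s \<le> u)) * ind (u \<le> x)) *
            ((\<beta> powi (Y - x) * ind (x \<le> Y)) * (\<beta> powi (v - s) * ind (s \<le> v)) * ind (v \<le> x))) = ?A x * ?B s" for x s
  proof (cases "M \<le> x \<and> x \<le> m' \<and> s \<le> mn")
    case True
    then have i: "x \<le> X" "s \<le> u" "u \<le> x" "x \<le> Y" "s \<le> v" "v \<le> x"
      by (auto simp: M_def m'_def mn_def)
    have "\<alpha> powi (u - s) = \<alpha> powi (u - mn) * \<alpha> powi (mn - s)"
      using a by (simp add: power_int_add[symmetric])
    moreover have "\<beta> powi (v - s) = \<beta> powi (v - mn) * \<beta> powi (mn - s)"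
      using a by (simp add: power_int_add[symmetric])
    ultimately show ?thesis using True i by (simp add: r_def power_int_mult_distrib mult_ac)
  next
    case False
    then show ?thesis by (auto simp: M_def m'_def mn_def)
  qed
  have "?L = gp (Geom (\<beta> * \<alpha>)) (z - mx) * (\<Sum>\<^sub>\<infinity>s\<in>UNIV. \<Sum>\<^sub>\<infinity>x\<in>UNIV. ennreal (?A x * ?B s))"
    unfolding LA mx_def ..
  also have "\<dots> = gp (Geom (\<beta> * \<alpha>)) (z - mx) * ((\<Sum>\<^sub>\<infinity>x\<in>UNIV. ennreal (?A x)) * (\<Sum>\<^sub>\<infinity>s\<in>UNIV. ennreal (?B s)))"
    using a r by (subst infsum_prod_sep) (auto intro!: mult_nonneg_nonneg)
  also have "(\<Sum>\<^sub>\<infinity>s\<in>UNIV. ennreal (?B s)) = ennreal ?K * ennreal (1 / (1 - r))"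
    using a r by (subst infsum_cmult_ennreal_real) (auto simp: geo_tail)
  also have "(\<Sum>\<^sub>\<infinity>x\<in>UNIV. ennreal (?A x)) = ennreal (\<Sum>x\<in>{M..m'}. \<alpha> powi (X - x) * \<beta> powi (Y - x))"
    using a by (subst infsum_interval) auto
  also have "gp (Geom (\<beta> * \<alpha>)) (z - mx) = ennreal ((1 - r) * r powi (z - mx))"
    using r z by (subst gp_Geom) (auto simp: r_def mult.commute)
  finally have L: "?L = ennreal ((1 - r) * r powi (z - mx)) * (ennreal (\<Sum>x\<in>{M..m'}. \<alpha> powi (X - x) * \<beta> powi (Y - x)) *
                      (ennreal ?K * ennreal (1 / (1 - r))))" .
  have "?L = ennreal ((\<Sum>x\<in>{M..m'}. \<alpha> powi (X - x) * \<beta> powi (Y - x)) * ?K * r powi (z - mx))"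
  proof -
    have nn: "0 \<le> (\<Sum>x\<in>{M..m'}. \<alpha> powi (X - x) * \<beta> powi (Y - x))" using a by (auto intro!: sum_nonneg)
    have "?L = ennreal ((1 - r) * r powi (z - mx) * ((\<Sum>x\<in>{M..m'}. \<alpha> powi (X - x) * \<beta> powi (Y - x)) * (?K * (1 / (1 - r)))))"
      unfolding L using r a nn by (intro ennreal_mult4) auto
    also have "(1 - r) * r powi (z - mx) * ((\<Sum>x\<in>{M..m'}. \<alpha> powi (X - x) * \<beta> powi (Y - x)) * (?K * (1 / (1 - r))))
        = (\<Sum>x\<in>{M..m'}. \<alpha> powi (X - x) * \<beta> powi (Y - x)) * ?K * r powi (z - mx)"
      using r by (simp add: field_simps)
    finally show ?thesis .
  qed
  also have "(\<Sum>x\<in>{M..m'}. \<alpha> powi (X - x) * \<beta> powi (Y - x)) * ?K * r powi (z - mx)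
      = (\<Sum>x\<in>{M..m'}. \<alpha> powi (X - x) * \<beta> powi (Y - x) * ?K * r powi (z - mx))"
    by (simp add: sum_distrib_right)
  also have "\<dots> = (\<Sum>s\<in>{M..m'}. \<beta> powi (z - X + s - u) * \<alpha> powi (z - Y + s - v))"
  proof (rule sum.reindex_bij_witness[where i="\<lambda>t. M + m' - t" and j="\<lambda>t. M + m' - t"])
    fix x assume x: "x \<in> {M..m'}"
    let ?s = "M + m' - x"
    have e1: "X - x + (u - mn) + (z - mx) = z - Y + ?s - v" using Mmn mmx by simp
    have e2: "Y - x + (v - mn) + (z - mx) = z - X + ?s - u" using Mmn mmx by simp
    have "\<alpha> powi (X - x) * \<beta> powi (Y - x) * ?K * r powi (z - mx) =
       (\<alpha> powi (X - x) * \<alpha> powi (u - mn) * \<alpha> powi (z - mx)) * (\<beta> powi (Y - x) * \<beta> powi (v - mn) * \<beta> powi (z - mx))"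
      by (simp add: r_def power_int_mult_distrib mult_ac)
    also have "\<dots> = \<alpha> powi (z - Y + ?s - v) * \<beta> powi (z - X + ?s - u)"
      using a by (simp only: powi3 e1 e2)
    finally show "\<beta> powi (z - X + ?s - u) * \<alpha> powi (z - Y + ?s - v) = \<alpha> powi (X - x) * \<beta> powi (Y - x) * ?K * r powi (z - mx)"
      by simp
  qed auto
  also have "ennreal (\<Sum>s\<in>{M..m'}. \<beta> powi (z - X + s - u) * \<alpha> powi (z - Y + s - v)) = ?R"
  proof -
    have "?R = (\<Sum>\<^sub>\<infinity>s\<in>UNIV. ennreal (ind (M \<le> s \<and> s \<le> m') * (\<beta> powi (z - X + s - u) * \<alpha> powi (z - Y + s - v))))"
    proof (rule infsum_cong)
      fix s
      show "ennreal (((\<beta> powi (z - X) * ind (X \<le> z)) * (\<beta> powi (s - u) * ind (u \<le> s)) * ind (s \<le> X)) *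
                          ((\<alpha> powi (z - Y) * ind (Y \<le> z)) * (\<alpha> powi (s - v) * ind (v \<le> s)) * ind (s \<le> Y))) =
            ennreal (ind (M \<le> s \<and> s \<le> m') * (\<beta> powi (z - X + s - u) * \<alpha> powi (z - Y + s - v)))"
      proof (cases "M \<le> s \<and> s \<le> m'")
        case True
        then have i: "u \<le> s" "v \<le> s" "s \<le> X" "s \<le> Y" by (auto simp: M_def m'_def)
        have zz: "X \<le> z" "Y \<le> z" using z by (auto simp: mx_def)
        have e1: "z - X + s - u = (z - X) + (s - u)" by simp
        have e2: "z - Y + s - v = (z - Y) + (s - v)" by simp
        have "\<beta> powi (z - X + s - u) = \<beta> powi (z - X) * \<beta> powi (s - u)"
          unfolding e1 by (rule power_int_add) (use a in simp)
        moreover have "\<alpha> powi (z - Y + s - v) = \<alpha> powi (z - Y) * \<alpha> powi (s - v)"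
          unfolding e2 by (rule power_int_add) (use a in simp)
        ultimately show ?thesis using True i zz by (simp add: mult_ac)
      next
        case False
        then show ?thesis by (auto simp: M_def m'_def)
      qed
    qed
    also have "\<dots> = ennreal (\<Sum>s\<in>{M..m'}. \<beta> powi (z - X + s - u) * \<alpha> powi (z - Y + s - v))"
      using a by (subst infsum_interval) auto
    finally show ?thesis by simp
  qed
  finally show ?thesis .
qed

lemma ennreal_mult3:
  fixes a b d :: real
  assumes "0 \<le> a" "0 \<le> b" "0 \<le> d"
  shows "ennreal a * (ennreal b * ennreal d) = ennreal (a * (b * d))"
  using assms by (simp add: ennreal_mult mult_nonneg_nonneg)

lemma powi2: "(x::real) \<noteq> 0 \<Longrightarrow> x powi a * x powi b = x powi (a + b)"
  by (simp add: power_int_add)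

lemma bnd_scalar:
  fixes b c :: real and Y v z :: int
  assumes a: "0 < b" "0 < c" "b * c < 1"
  shows "gp (Geom (b * c)) (z - Y) *
     (\<Sum>\<^sub>\<infinity>s\<in>UNIV. \<Sum>\<^sub>\<infinity>x\<in>UNIV. ennreal (c powi (x - s) * ((b powi (Y - x) * ind (x \<le> Y)) * (b powi (v - s) * ind (s \<le> v)) * ind (v \<le> x))))
   = (\<Sum>\<^sub>\<infinity>s\<in>UNIV. ennreal (c powi (z - s) * ((b powi (z - Y) * ind (Y \<le> z)) * (b powi (s - v) * ind (v \<le> s)) * ind (s \<le> Y))))"
    (is "?L = ?R")
proof (cases "z < Y")
  case True
  have "?R = 0"
  proof (rule infsum_0)
    fix s
    show "ennreal (c powi (z - s) * ((b powi (z - Y) * ind (Y \<le> z)) * (b powi (s - v) * ind (v \<le> s)) * ind (s \<le> Y))) = 0"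
      using True by simp
  qed
  moreover have "?L = 0" using True by (simp add: gp_neg)
  ultimately show ?thesis by simp
next
  case False
  define r where "r = b * c"
  have r: "0 < r" "r < 1" using a by (auto simp: r_def)
  have z: "Y \<le> z" using False by simp
  let ?A = "\<lambda>x. ind (v \<le> x \<and> x \<le> Y) * (c powi (x - v) * b powi (Y - x))"
  let ?B = "\<lambda>s. ind (s \<le> v) * r powi (v - s)"
  have LA: "c powi (x - s) * ((b powi (Y - x) * ind (x \<le> Y)) * (b powi (v - s) * ind (s \<le> v)) * ind (v \<le> x)) = ?A x * ?B s" for x s
  proof (cases "v \<le> x \<and> x \<le> Y \<and> s \<le> v")
    case True
    have e: "x - s = (x - v) + (v - s)" by simp
    have "c powi (x - s) = c powi (x - v) * c powi (v - s)"
      unfolding e by (rule power_int_add) (use a in simp)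
    then show ?thesis using True by (simp add: r_def power_int_mult_distrib mult_ac)
  next
    case False
    then show ?thesis by auto
  qed
  have G: "gp (Geom (b * c)) (z - Y) = ennreal ((1 - r) * r powi (z - Y))"
    using r z by (subst gp_Geom) (auto simp: r_def)
  have "?L = ennreal ((1 - r) * r powi (z - Y)) * (\<Sum>\<^sub>\<infinity>s\<in>UNIV. \<Sum>\<^sub>\<infinity>x\<in>UNIV. ennreal (?A x * ?B s))"
    unfolding LA G ..
  also have "\<dots> = ennreal ((1 - r) * r powi (z - Y)) * ((\<Sum>\<^sub>\<infinity>x\<in>UNIV. ennreal (?A x)) * (\<Sum>\<^sub>\<infinity>s\<in>UNIV. ennreal (?B s)))"
    using a r by (subst infsum_prod_sep) (auto intro!: mult_nonneg_nonneg)
  also have "(\<Sum>\<^sub>\<infinity>s\<in>UNIV. ennreal (?B s)) = ennreal (1 / (1 - r))"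
    using r by (simp add: geo_tail)
  also have "(\<Sum>\<^sub>\<infinity>x\<in>UNIV. ennreal (?A x)) = ennreal (\<Sum>x\<in>{v..Y}. c powi (x - v) * b powi (Y - x))"
    using a by (subst infsum_interval) auto
  finally have L: "?L = ennreal ((1 - r) * r powi (z - Y)) * (ennreal (\<Sum>x\<in>{v..Y}. c powi (x - v) * b powi (Y - x)) *
                      ennreal (1 / (1 - r)))" .
  have "?L = ennreal ((\<Sum>x\<in>{v..Y}. c powi (x - v) * b powi (Y - x)) * r powi (z - Y))"
  proof -
    have nn: "0 \<le> (\<Sum>x\<in>{v..Y}. c powi (x - v) * b powi (Y - x))" using a by (auto intro!: sum_nonneg)
    have "?L = ennreal ((1 - r) * r powi (z - Y) * ((\<Sum>x\<in>{v..Y}. c powi (x - v) * b powi (Y - x)) * (1 / (1 - r))))"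
      unfolding L using r a nn by (intro ennreal_mult3) auto
    also have "(1 - r) * r powi (z - Y) * ((\<Sum>x\<in>{v..Y}. c powi (x - v) * b powi (Y - x)) * (1 / (1 - r)))
        = (\<Sum>x\<in>{v..Y}. c powi (x - v) * b powi (Y - x)) * r powi (z - Y)"
      using r by (simp add: field_simps)
    finally show ?thesis .
  qed
  also have "(\<Sum>x\<in>{v..Y}. c powi (x - v) * b powi (Y - x)) * r powi (z - Y)
      = (\<Sum>x\<in>{v..Y}. c powi (x - v) * b powi (Y - x) * r powi (z - Y))"
    by (simp add: sum_distrib_right)
  also have "\<dots> = (\<Sum>s\<in>{v..Y}. c powi (z - s) * b powi (z - Y + s - v))"
  proof (rule sum.reindex_bij_witness[where i="\<lambda>t. v + Y - t" and j="\<lambda>t. v + Y - t"])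
    fix x assume x: "x \<in> {v..Y}"
    let ?s = "v + Y - x"
    have e1: "x - v + (z - Y) = z - ?s" by simp
    have e2: "Y - x + (z - Y) = z - Y + ?s - v" by simp
    have "c powi (x - v) * b powi (Y - x) * r powi (z - Y) =
       (c powi (x - v) * c powi (z - Y)) * (b powi (Y - x) * b powi (z - Y))"
      by (simp add: r_def power_int_mult_distrib mult_ac)
    also have "\<dots> = c powi (z - ?s) * b powi (z - Y + ?s - v)"
      using a by (simp only: powi2 e1 e2)
    finally show "c powi (z - ?s) * b powi (z - Y + ?s - v) = c powi (x - v) * b powi (Y - x) * r powi (z - Y)"
      by simp
  qed auto
  also have "ennreal (\<Sum>s\<in>{v..Y}. c powi (z - s) * b powi (z - Y + s - v)) = ?R"
  proof -
    have "?R = (\<Sum>\<^sub>\<infinity>s\<in>UNIV. ennreal (ind (v \<le> s \<and> s \<le> Y) * (c powi (z - s) * b powi (z - Y + s - v))))"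
    proof (rule infsum_cong)
      fix s
      show "ennreal (c powi (z - s) * ((b powi (z - Y) * ind (Y \<le> z)) * (b powi (s - v) * ind (v \<le> s)) * ind (s \<le> Y))) =
            ennreal (ind (v \<le> s \<and> s \<le> Y) * (c powi (z - s) * b powi (z - Y + s - v)))"
      proof (cases "v \<le> s \<and> s \<le> Y")
        case True
        have e1: "z - Y + s - v = (z - Y) + (s - v)" by simp
        have "b powi (z - Y + s - v) = b powi (z - Y) * b powi (s - v)"
          unfolding e1 by (rule power_int_add) (use a in simp)
        then show ?thesis using True z by (simp add: mult_ac)
      next
        case False
        then show ?thesis by auto
      qed
    qed
    also have "\<dots> = ennreal (\<Sum>s\<in>{v..Y}. c powi (z - s) * b powi (z - Y + s - v))"
      using a by (subst infsum_interval) auto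
    finally show ?thesis by simp
  qed
  finally show ?thesis .
qed



definition ef :: "(int \<Rightarrow> real) \<Rightarrow> (nat \<Rightarrow> vertex) \<Rightarrow> (nat \<Rightarrow> int) \<Rightarrow> (nat \<Rightarrow> int) \<Rightarrow> nat \<Rightarrow> real" where
  "ef a P l1 l2 j =
        (lab a P j powi (l1 (up P j) - l1 (low P j)) * ind (l1 (up P j) \<ge> l1 (low P j))) *
        (lab a P j powi (l2 (up P j) - l2 (low P j)) * ind (l2 (up P j) \<ge> l2 (low P j))) *
        ind (l1 (low P j) \<ge> l2 (up P j))"

lemma wtGP_ef: "wtGP N a c1 c2 P l1 l2 = c1 powi (l1 0 - l2 0) * c2 powi (l1 N - l2 N) * (\<Prod>j\<in>{1..N}. ef a P l1 l2 j)"
  unfolding wtGP_def ef_def ..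

lemma ef_horiz:
  assumes "horiz P i"
  shows "ef a P l1 l2 i = (a (fst (P i)) powi (l1 i - l1 (i-1)) * ind (l1 (i-1) \<le> l1 i)) *
            (a (fst (P i)) powi (l2 i - l2 (i-1)) * ind (l2 (i-1) \<le> l2 i)) * ind (l2 i \<le> l1 (i-1))"
  using assms unfolding ef_def lab_def up_def low_def by simp

lemma ef_vert:
  assumes "\<not> horiz P i"
  shows "ef a P l1 l2 i = (a (snd (P (i-1))) powi (l1 (i-1) - l1 i) * ind (l1 i \<le> l1 (i-1))) *
            (a (snd (P (i-1))) powi (l2 (i-1) - l2 i) * ind (l2 i \<le> l2 (i-1))) * ind (l2 (i-1) \<le> l1 i)"
  using assms unfolding ef_def lab_def up_def low_def by simp

lemma ef_nonneg: "(\<And>k. 0 < a k) \<Longrightarrow> 0 \<le> ef a P l1 l2 i"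
proof -
  assume "\<And>k. 0 < a k"
  then have "\<And>k. 0 \<le> a k" by (simp add: less_imp_le)
  then show ?thesis unfolding ef_def lab_def by (auto intro!: mult_nonneg_nonneg)
qed

lemma ef_cong:
  assumes "P i = P' i" "P (i-1) = P' (i-1)"
    "l1 i = l1' i" "l1 (i-1) = l1' (i-1)" "l2 i = l2' i" "l2 (i-1) = l2' (i-1)"
  shows "ef a P l1 l2 i = ef a P' l1' l2' i"
proof -
  have h: "horiz P i = horiz P' i" using assms unfolding horiz_def by simp
  show ?thesis
  proof (cases "horiz P i")
    case True
    then show ?thesis using h assms by (simp add: ef_horiz)
  next
    case False
    then show ?thesis using h assms by (simp add: ef_vert)
  qed
qed

definition Rest :: "nat \<Rightarrow> (int \<Rightarrow> real) \<Rightarrow> real \<Rightarrow> real \<Rightarrow> (nat \<Rightarrow> vertex) \<Rightarrow> nat \<Rightarrow> (nat \<Rightarrow> int) \<Rightarrow> (nat \<Rightarrow> int) \<Rightarrow> real" where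
  "Rest N a c1 c2 P j l1 l2 = (if j = 0 then 1 else c1 powi (l1 0 - l2 0)) * (if j = N then 1 else c2 powi (l1 N - l2 N)) *
      (\<Prod>i\<in>{1..N} - {j, Suc j}. ef a P l1 l2 i)"

definition Loc :: "nat \<Rightarrow> (int \<Rightarrow> real) \<Rightarrow> real \<Rightarrow> real \<Rightarrow> (nat \<Rightarrow> vertex) \<Rightarrow> nat \<Rightarrow> (nat \<Rightarrow> int) \<Rightarrow> (nat \<Rightarrow> int) \<Rightarrow> real" where
  "Loc N a c1 c2 P j l1 l2 = (if j = 0 then c1 powi (l1 0 - l2 0) else 1) * (if j = N then c2 powi (l1 N - l2 N) else 1) *
      (\<Prod>i\<in>{1..N} \<inter> {j, Suc j}. ef a P l1 l2 i)"

lemma wtGP_split: "wtGP N a c1 c2 P l1 l2 = Rest N a c1 c2 P j l1 l2 * Loc N a c1 c2 P j l1 l2"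
proof -
  have "(\<Prod>i\<in>{1..N}. ef a P l1 l2 i) = (\<Prod>i\<in>{1..N} \<inter> {j, Suc j}. ef a P l1 l2 i) * (\<Prod>i\<in>{1..N} - {j, Suc j}. ef a P l1 l2 i)"
    by (rule prod.Int_Diff) simp
  then show ?thesis unfolding wtGP_ef Rest_def Loc_def by (simp add: mult_ac)
qed

lemma Rest_nonneg:
  assumes "\<And>k. 0 < a k" "0 < c1" "0 < c2"
  shows "0 \<le> Rest N a c1 c2 P j l1 l2"
  unfolding Rest_def using assms by (auto intro!: mult_nonneg_nonneg prod_nonneg ef_nonneg)

lemma Loc_nonneg:
  assumes "\<And>k. 0 < a k" "0 < c1" "0 < c2"
  shows "0 \<le> Loc N a c1 c2 P j l1 l2"
  unfolding Loc_def using assms by (auto intro!: mult_nonneg_nonneg prod_nonneg ef_nonneg)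

lemma Rest_cong:
  assumes "\<And>i. i \<noteq> j \<Longrightarrow> P i = P' i" "\<And>i. i \<noteq> j \<Longrightarrow> l1 i = l1' i" "\<And>i. i \<noteq> j \<Longrightarrow> l2 i = l2' i"
  shows "Rest N a c1 c2 P j l1 l2 = Rest N a c1 c2 P' j l1' l2'"
proof -
  have "(\<Prod>i\<in>{1..N} - {j, Suc j}. ef a P l1 l2 i) = (\<Prod>i\<in>{1..N} - {j, Suc j}. ef a P' l1' l2' i)"
  proof (rule prod.cong)
    fix i assume i: "i \<in> {1..N} - {j, Suc j}"
    then have "i \<noteq> j" "i - 1 \<noteq> j" by auto
    then show "ef a P l1 l2 i = ef a P' l1' l2' i" using assms by (intro ef_cong) auto
  qed simp
  moreover have "j \<noteq> 0 \<Longrightarrow> c1 powi (l1 0 - l2 0) = c1 powi (l1' 0 - l2' 0)" using assms by simp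
  moreover have "j \<noteq> N \<Longrightarrow> c2 powi (l1 N - l2 N) = c2 powi (l1' N - l2' N)" using assms by simp
  ultimately show ?thesis unfolding Rest_def by simp
qed

lemma countable_Zvec: "countable (Zvec N)"
proof -
  have "Zvec N \<subseteq> range (\<lambda>xs::int list. \<lambda>i. if i < length xs then xs ! i else 0)"
  proof
    fix f assume f: "f \<in> Zvec N"
    have "f = (\<lambda>i. if i < length (map f [0..<Suc N]) then (map f [0..<Suc N]) ! i else 0)"
    proof
      fix i show "f i = (if i < length (map f [0..<Suc N]) then (map f [0..<Suc N]) ! i else 0)"
        using f unfolding Zvec_def by (cases "i < Suc N") (auto simp del: upt_Suc)
    qed
    then show "f \<in> range (\<lambda>xs::int list. \<lambda>i. if i < length xs then xs ! i else 0)" by blast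
  qed
  moreover have "countable (range (\<lambda>xs::int list. \<lambda>i. if i < length xs then xs ! i else 0))" by simp
  ultimately show ?thesis by (rule countable_subset)
qed

lemma Zvec_split:
  fixes g :: "(nat \<Rightarrow> int) \<Rightarrow> ennreal"
  assumes j: "j \<le> N"
  shows "(\<Sum>\<^sub>\<infinity>l\<in>Zvec N. g l) = (\<Sum>\<^sub>\<infinity>l0\<in>{l. l \<in> Zvec N \<and> l j = 0}. \<Sum>\<^sub>\<infinity>s\<in>UNIV. g (l0(j := s)))"
proof -
  let ?Z0 = "{l. l \<in> Zvec N \<and> l j = 0}"
  have bij: "bij_betw (\<lambda>(l0, s). l0(j := s)) (?Z0 \<times> UNIV) (Zvec N)"
  proof (rule bij_betwI[where g="\<lambda>l. (l(j := 0), l j)"])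
    show "(\<lambda>(l0, s). l0(j := s)) \<in> ?Z0 \<times> UNIV \<rightarrow> Zvec N" using j by (auto simp: Zvec_def)
    show "(\<lambda>l. (l(j := 0), l j)) \<in> Zvec N \<rightarrow> ?Z0 \<times> UNIV" using j by (auto simp: Zvec_def)
  qed (auto simp: fun_eq_iff)
  have c0: "countable ?Z0" by (rule countable_subset[OF _ countable_Zvec]) auto
  have "(\<Sum>\<^sub>\<infinity>l\<in>Zvec N. g l) = (\<Sum>\<^sub>\<infinity>z\<in>?Z0 \<times> UNIV. g ((\<lambda>(l0, s). l0(j := s)) z))"
    using infsum_reindex_bij_betw[OF bij, of g] by simp
  also have "\<dots> = (\<Sum>\<^sub>\<infinity>l0\<in>?Z0. \<Sum>\<^sub>\<infinity>s\<in>UNIV. g (l0(j := s)))"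
    by (subst infsum_Sigma_ennreal) (use c0 in auto)
  finally show ?thesis .
qed



definition Fj :: "nat \<Rightarrow> nat \<Rightarrow> (nat \<Rightarrow> int) \<Rightarrow> int" where
  "Fj N j \<mu> = (if j = 0 then \<mu> 1 else if j = N then \<mu> (N - 1) else max (\<mu> (j - 1)) (\<mu> (Suc j)))"

definition mv :: "nat \<Rightarrow> (nat \<Rightarrow> int) \<Rightarrow> (nat \<Rightarrow> int) \<Rightarrow> nat \<Rightarrow> bool" where
  "mv N h' h j \<longleftrightarrow> j \<le> N \<and> h = h'(j := h' j + 1) \<and> (j = 0 \<longrightarrow> h' 1 = h' 0) \<and>
     (j = N \<longrightarrow> h' (N - 1) = h' N + 1) \<and> (0 < j \<and> j < N \<longrightarrow> h' (j - 1) = h' j + 1 \<and> h' (Suc j) = h' j)"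

lemma Fj_upd: "1 \<le> N \<Longrightarrow> Fj N j (\<mu>(j := x)) = Fj N j \<mu>"
  unfolding Fj_def by auto

locale params =
  fixes N :: nat and a :: "int \<Rightarrow> real" and c1 c2 :: real
  assumes N: "1 \<le> N" and apos: "\<And>k. 0 < a k" and aper: "\<And>k. a (k + int N) = a k"
    and c1: "0 < c1" and c2: "0 < c2" and aa: "\<And>i k. a i * a k < 1"
    and ac1: "\<And>i. a i * c1 < 1" and ac2: "\<And>i. a i * c2 < 1"
begin

lemma loc_bulk:
  assumes m: "mv N h' h j" and j: "0 < j" "j < N"
  shows "gp (Geom (qpar N a c1 c2 (mk h j))) (l1 j - Fj N j l1) *
      (\<Sum>\<^sub>\<infinity>s\<in>UNIV. \<Sum>\<^sub>\<infinity>x\<in>UNIV. ennreal (Loc N a c1 c2 (mk h') j (l1(j := x)) (l2(j := s))))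
    = (\<Sum>\<^sub>\<infinity>s\<in>UNIV. ennreal (Loc N a c1 c2 (mk h) j l1 (l2(j := s))))"
proof -
  have hj: "h = h'(j := h' j + 1)" and h1: "h' (j - 1) = h' j + 1" and h2: "h' (Suc j) = h' j"
    using m j unfolding mv_def by auto
  define \<alpha> where "\<alpha> = a (h' j + 1)"
  define \<beta> where "\<beta> = a (h' j + 1 + int j)"
  define X where "X = l1 (j - 1)"
  define Y where "Y = l1 (Suc j)"
  define u where "u = l2 (j - 1)"
  define v where "v = l2 (Suc j)"
  have jj: "j - 1 \<noteq> j" "Suc j \<noteq> j" "Suc j - 1 = j" "j \<noteq> 0" "j \<noteq> N" "1 \<le> j" "1 \<le> Suc j" using j by auto
  have I: "{1..N} \<inter> {j, Suc j} = {j, Suc j}" using j by auto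
  have Lo: "Loc N a c1 c2 P j L1 L2 = ef a P L1 L2 j * ef a P L1 L2 (Suc j)" for P L1 L2
    unfolding Loc_def I using jj by simp
  have hv1: "\<not> horiz (mk h') j" using h1 jj by (simp add: horiz_mk)
  have hh1: "horiz (mk h') (Suc j)" using h2 by (simp add: horiz_mk)
  have hh2: "horiz (mk h) j" using h1 jj hj by (simp add: horiz_mk)
  have hv2: "\<not> horiz (mk h) (Suc j)" using h2 hj by (simp add: horiz_mk)
  have a1: "a (snd (mk h' (j - 1))) = \<alpha>" using h1 by (simp add: mk_def \<alpha>_def)
  have a2: "a (fst (mk h' (Suc j))) = \<beta>" using h2 by (simp add: mk_def \<beta>_def algebra_simps)
  have a3: "a (fst (mk h j)) = \<beta>" using hj by (simp add: mk_def \<beta>_def)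
  have a4: "a (snd (mk h (Suc j - 1))) = \<alpha>" using hj jj by (simp add: mk_def \<alpha>_def)
  have q: "qpar N a c1 c2 (mk h j) = \<beta> * \<alpha>"
    using hj jj by (simp add: qpar_def mk_def \<alpha>_def \<beta>_def)
  have F: "Fj N j l1 = max X Y" using jj by (simp add: Fj_def X_def Y_def)
  have e1: "Loc N a c1 c2 (mk h') j (l1(j := x)) (l2(j := s)) =
     ((\<alpha> powi (X - x) * ind (x \<le> X)) * (\<alpha> powi (u - s) * ind (s \<le> u)) * ind (u \<le> x)) *
     ((\<beta> powi (Y - x) * ind (x \<le> Y)) * (\<beta> powi (v - s) * ind (s \<le> v)) * ind (v \<le> x))" for x s
    unfolding Lo ef_vert[OF hv1] ef_horiz[OF hh1] a1 a2 using jj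
    by (simp add: X_def Y_def u_def v_def)
  have e2: "Loc N a c1 c2 (mk h) j l1 (l2(j := s)) =
     ((\<beta> powi (l1 j - X) * ind (X \<le> l1 j)) * (\<beta> powi (s - u) * ind (u \<le> s)) * ind (s \<le> X)) *
     ((\<alpha> powi (l1 j - Y) * ind (Y \<le> l1 j)) * (\<alpha> powi (s - v) * ind (v \<le> s)) * ind (s \<le> Y))" for s
    unfolding Lo ef_horiz[OF hh2] ef_vert[OF hv2] a3 a4 using jj
    by (simp add: X_def Y_def u_def v_def)
  show ?thesis unfolding e1 e2 q F
    by (rule bulk_scalar) (use apos aa in \<open>auto simp: \<alpha>_def \<beta>_def\<close>)
qed

lemma loc_first:
  assumes m: "mv N h' h 0"
  shows "gp (Geom (qpar N a c1 c2 (mk h 0))) (l1 0 - Fj N 0 l1) *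
      (\<Sum>\<^sub>\<infinity>s\<in>UNIV. \<Sum>\<^sub>\<infinity>x\<in>UNIV. ennreal (Loc N a c1 c2 (mk h') 0 (l1(0 := x)) (l2(0 := s))))
    = (\<Sum>\<^sub>\<infinity>s\<in>UNIV. ennreal (Loc N a c1 c2 (mk h) 0 l1 (l2(0 := s))))"
proof -
  have hj: "h = h'(0 := h' 0 + 1)" and h1: "h' 1 = h' 0"
    using m unfolding mv_def by auto
  define b where "b = a (h' 0 + 1)"
  define Y where "Y = l1 1"
  define v where "v = l2 1"
  have NN: "0 \<noteq> N" using N by auto
  have I: "{1..N} \<inter> {0, Suc 0} = {1}" using N by auto
  have Lo: "Loc N a c1 c2 P 0 L1 L2 = c1 powi (L1 0 - L2 0) * ef a P L1 L2 1" for P L1 L2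
    unfolding Loc_def I using NN by simp
  have hh1: "horiz (mk h') 1" using h1 by (simp add: horiz_mk)
  have hv2: "\<not> horiz (mk h) 1" using h1 hj by (simp add: horiz_mk)
  have a1: "a (fst (mk h' 1)) = b" using h1 by (simp add: mk_def b_def)
  have a2: "a (snd (mk h (1 - 1))) = b" using hj by (simp add: mk_def b_def)
  have q: "qpar N a c1 c2 (mk h 0) = b * c1"
    using hj by (simp add: qpar_def mk_def b_def)
  have F: "Fj N 0 l1 = Y" by (simp add: Fj_def Y_def)
  have e1: "Loc N a c1 c2 (mk h') 0 (l1(0 := x)) (l2(0 := s)) =
     c1 powi (x - s) * ((b powi (Y - x) * ind (x \<le> Y)) * (b powi (v - s) * ind (s \<le> v)) * ind (v \<le> x))" for x s
    unfolding Lo ef_horiz[OF hh1] a1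
    by (simp add: Y_def v_def)
  have e2: "Loc N a c1 c2 (mk h) 0 l1 (l2(0 := s)) =
     c1 powi (l1 0 - s) * ((b powi (l1 0 - Y) * ind (Y \<le> l1 0)) * (b powi (s - v) * ind (v \<le> s)) * ind (s \<le> Y))" for s
    unfolding Lo ef_vert[OF hv2] a2
    by (simp add: Y_def v_def)
  show ?thesis unfolding e1 e2 q F
    by (rule bnd_scalar) (use apos c1 ac1 in \<open>auto simp: b_def\<close>)
qed

lemma loc_last:
  assumes m: "mv N h' h N"
  shows "gp (Geom (qpar N a c1 c2 (mk h N))) (l1 N - Fj N N l1) *
      (\<Sum>\<^sub>\<infinity>s\<in>UNIV. \<Sum>\<^sub>\<infinity>x\<in>UNIV. ennreal (Loc N a c1 c2 (mk h') N (l1(N := x)) (l2(N := s))))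
    = (\<Sum>\<^sub>\<infinity>s\<in>UNIV. ennreal (Loc N a c1 c2 (mk h) N l1 (l2(N := s))))"
proof -
  have hj: "h = h'(N := h' N + 1)" and h1: "h' (N - 1) = h' N + 1"
    using m unfolding mv_def by auto
  define b where "b = a (h' N + 1)"
  define Y where "Y = l1 (N - 1)"
  define v where "v = l2 (N - 1)"
  have NN: "N \<noteq> 0" "N - 1 \<noteq> N" "1 \<le> N" using N by auto
  have I: "{1..N} \<inter> {N, Suc N} = {N}" using N by auto
  have Lo: "Loc N a c1 c2 P N L1 L2 = c2 powi (L1 N - L2 N) * ef a P L1 L2 N" for P L1 L2
    unfolding Loc_def I using NN by simp
  have hv1: "\<not> horiz (mk h') N" using h1 NN by (simp add: horiz_mk)
  have hh2: "horiz (mk h) N" using h1 hj NN by (simp add: horiz_mk)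
  have a1: "a (snd (mk h' (N - 1))) = b" using h1 by (simp add: mk_def b_def)
  have a2: "a (fst (mk h N)) = b" using hj aper by (simp add: mk_def b_def)
  have q: "qpar N a c1 c2 (mk h N) = b * c2"
    using hj NN by (simp add: qpar_def mk_def b_def)
  have F: "Fj N N l1 = Y" using NN by (simp add: Fj_def Y_def)
  have e1: "Loc N a c1 c2 (mk h') N (l1(N := x)) (l2(N := s)) =
     c2 powi (x - s) * ((b powi (Y - x) * ind (x \<le> Y)) * (b powi (v - s) * ind (s \<le> v)) * ind (v \<le> x))" for x s
    unfolding Lo ef_vert[OF hv1] a1 using NN
    by (simp add: Y_def v_def)
  have e2: "Loc N a c1 c2 (mk h) N l1 (l2(N := s)) =
     c2 powi (l1 N - s) * ((b powi (l1 N - Y) * ind (Y \<le> l1 N)) * (b powi (s - v) * ind (v \<le> s)) * ind (s \<le> Y))" for s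
    unfolding Lo ef_horiz[OF hh2] a2 using NN
    by (simp add: Y_def v_def)
  show ?thesis unfolding e1 e2 q F
    by (rule bnd_scalar) (use apos c2 ac2 in \<open>auto simp: b_def\<close>)
qed

lemma loc_identity:
  assumes m: "mv N h' h j"
  shows "gp (Geom (qpar N a c1 c2 (mk h j))) (l1 j - Fj N j l1) *
      (\<Sum>\<^sub>\<infinity>s\<in>UNIV. \<Sum>\<^sub>\<infinity>x\<in>UNIV. ennreal (Loc N a c1 c2 (mk h') j (l1(j := x)) (l2(j := s))))
    = (\<Sum>\<^sub>\<infinity>s\<in>UNIV. ennreal (Loc N a c1 c2 (mk h) j l1 (l2(j := s))))"
proof -
  have "j \<le> N" using m unfolding mv_def by auto
  then consider "j = 0" | "j = N" | "0 < j \<and> j < N" by linarith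
  then show ?thesis
  proof cases
    case 1 then show ?thesis using loc_first m by simp
  next
    case 2 then show ?thesis using loc_last m by simp
  next
    case 3 then show ?thesis using loc_bulk m by simp
  qed
qed

end



context params
begin

lemma wtGP_rest_loc:
  assumes m: "mv N h' h j"
  shows "wtGP N a c1 c2 (mk h') (l1(j := x)) (l2(j := s)) = Rest N a c1 c2 (mk h) j l1 l2 * Loc N a c1 c2 (mk h') j (l1(j := x)) (l2(j := s))"
    and "wtGP N a c1 c2 (mk h) l1 (l2(j := s)) = Rest N a c1 c2 (mk h) j l1 l2 * Loc N a c1 c2 (mk h) j l1 (l2(j := s))"
proof -
  have hj: "h = h'(j := h' j + 1)" using m unfolding mv_def by auto
  have "Rest N a c1 c2 (mk h') j (l1(j := x)) (l2(j := s)) = Rest N a c1 c2 (mk h) j l1 l2"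
    by (rule Rest_cong) (auto simp: hj mk_def)
  then show "wtGP N a c1 c2 (mk h') (l1(j := x)) (l2(j := s)) = Rest N a c1 c2 (mk h) j l1 l2 * Loc N a c1 c2 (mk h') j (l1(j := x)) (l2(j := s))"
    by (simp add: wtGP_split[of _ _ _ _ _ _ _ j])
  have "Rest N a c1 c2 (mk h) j l1 (l2(j := s)) = Rest N a c1 c2 (mk h) j l1 l2"
    by (rule Rest_cong) auto
  then show "wtGP N a c1 c2 (mk h) l1 (l2(j := s)) = Rest N a c1 c2 (mk h) j l1 l2 * Loc N a c1 c2 (mk h) j l1 (l2(j := s))"
    by (simp add: wtGP_split[of _ _ _ _ _ _ _ j])
qed

lemma local_wtP:
  assumes m: "mv N h' h j"
  shows "(\<Sum>\<^sub>\<infinity>x\<in>UNIV. gp (Geom (qpar N a c1 c2 (mk h j))) (l' j - Fj N j (l'(j := x))) * wtP N a c1 c2 (mk h') (l'(j := x)))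
       = wtP N a c1 c2 (mk h) l'"
proof -
  have j: "j \<le> N" using m unfolding mv_def by auto
  let ?g = "gp (Geom (qpar N a c1 c2 (mk h j))) (l' j - Fj N j l')"
  let ?Z0 = "{l. l \<in> Zvec N \<and> l j = 0}"
  let ?R = "\<lambda>l0. Rest N a c1 c2 (mk h) j l' l0"
  have c0: "countable ?Z0" by (rule countable_subset[OF _ countable_Zvec]) auto
  have cU: "countable (UNIV :: int set)" by simp
  have "(\<Sum>\<^sub>\<infinity>x\<in>UNIV. gp (Geom (qpar N a c1 c2 (mk h j))) (l' j - Fj N j (l'(j := x))) * wtP N a c1 c2 (mk h') (l'(j := x)))
      = (\<Sum>\<^sub>\<infinity>x\<in>UNIV. ?g * wtP N a c1 c2 (mk h') (l'(j := x)))"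
    using N by (simp add: Fj_upd)
  also have "\<dots> = ?g * (\<Sum>\<^sub>\<infinity>x\<in>UNIV. wtP N a c1 c2 (mk h') (l'(j := x)))"
    by (rule infsum_cmult_left_ennreal) simp
  also have "(\<Sum>\<^sub>\<infinity>x\<in>UNIV. wtP N a c1 c2 (mk h') (l'(j := x)))
      = (\<Sum>\<^sub>\<infinity>x\<in>UNIV. \<Sum>\<^sub>\<infinity>l0\<in>?Z0. \<Sum>\<^sub>\<infinity>s\<in>UNIV. ennreal (wtGP N a c1 c2 (mk h') (l'(j := x)) (l0(j := s))))"
    unfolding wtP_def Zvec_split[OF j] ..
  also have "\<dots> = (\<Sum>\<^sub>\<infinity>l0\<in>?Z0. \<Sum>\<^sub>\<infinity>x\<in>UNIV. \<Sum>\<^sub>\<infinity>s\<in>UNIV. ennreal (wtGP N a c1 c2 (mk h') (l'(j := x)) (l0(j := s))))"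
    by (rule infsum_swap_ennreal[OF cU c0])
  also have "\<dots> = (\<Sum>\<^sub>\<infinity>l0\<in>?Z0. \<Sum>\<^sub>\<infinity>s\<in>UNIV. \<Sum>\<^sub>\<infinity>x\<in>UNIV. ennreal (wtGP N a c1 c2 (mk h') (l'(j := x)) (l0(j := s))))"
    by (rule infsum_cong) (rule infsum_swap_ennreal[OF cU cU])
  also have "\<dots> = (\<Sum>\<^sub>\<infinity>l0\<in>?Z0. ennreal (?R l0) * (\<Sum>\<^sub>\<infinity>s\<in>UNIV. \<Sum>\<^sub>\<infinity>x\<in>UNIV. ennreal (Loc N a c1 c2 (mk h') j (l'(j := x)) (l0(j := s)))))"
  proof (rule infsum_cong)
    fix l0
    have "(\<Sum>\<^sub>\<infinity>s\<in>UNIV. \<Sum>\<^sub>\<infinity>x\<in>UNIV. ennreal (wtGP N a c1 c2 (mk h') (l'(j := x)) (l0(j := s))))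
        = (\<Sum>\<^sub>\<infinity>s\<in>UNIV. \<Sum>\<^sub>\<infinity>x\<in>UNIV. ennreal (?R l0) * ennreal (Loc N a c1 c2 (mk h') j (l'(j := x)) (l0(j := s))))"
      unfolding wtGP_rest_loc(1)[OF m]
      using Rest_nonneg[OF apos c1 c2] Loc_nonneg[OF apos c1 c2] by (simp add: ennreal_mult)
    also have "\<dots> = (\<Sum>\<^sub>\<infinity>s\<in>UNIV. ennreal (?R l0) * (\<Sum>\<^sub>\<infinity>x\<in>UNIV. ennreal (Loc N a c1 c2 (mk h') j (l'(j := x)) (l0(j := s)))))"
      by (rule infsum_cong) (rule infsum_cmult_left_ennreal[OF cU])
    also have "\<dots> = ennreal (?R l0) * (\<Sum>\<^sub>\<infinity>s\<in>UNIV. \<Sum>\<^sub>\<infinity>x\<in>UNIV. ennreal (Loc N a c1 c2 (mk h') j (l'(j := x)) (l0(j := s))))"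
      by (rule infsum_cmult_left_ennreal[OF cU])
    finally show "(\<Sum>\<^sub>\<infinity>s\<in>UNIV. \<Sum>\<^sub>\<infinity>x\<in>UNIV. ennreal (wtGP N a c1 c2 (mk h') (l'(j := x)) (l0(j := s))))
        = ennreal (?R l0) * (\<Sum>\<^sub>\<infinity>s\<in>UNIV. \<Sum>\<^sub>\<infinity>x\<in>UNIV. ennreal (Loc N a c1 c2 (mk h') j (l'(j := x)) (l0(j := s))))" .
  qed
  finally have L: "(\<Sum>\<^sub>\<infinity>x\<in>UNIV. gp (Geom (qpar N a c1 c2 (mk h j))) (l' j - Fj N j (l'(j := x))) * wtP N a c1 c2 (mk h') (l'(j := x)))
     = ?g * (\<Sum>\<^sub>\<infinity>l0\<in>?Z0. ennreal (?R l0) * (\<Sum>\<^sub>\<infinity>s\<in>UNIV. \<Sum>\<^sub>\<infinity>x\<in>UNIV. ennreal (Loc N a c1 c2 (mk h') j (l'(j := x)) (l0(j := s)))))" .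
  also have "\<dots> = (\<Sum>\<^sub>\<infinity>l0\<in>?Z0. ennreal (?R l0) * (?g * (\<Sum>\<^sub>\<infinity>s\<in>UNIV. \<Sum>\<^sub>\<infinity>x\<in>UNIV. ennreal (Loc N a c1 c2 (mk h') j (l'(j := x)) (l0(j := s))))))"
    by (subst infsum_cmult_left_ennreal[OF c0, symmetric]) (simp add: mult_ac)
  also have "\<dots> = (\<Sum>\<^sub>\<infinity>l0\<in>?Z0. ennreal (?R l0) * (\<Sum>\<^sub>\<infinity>s\<in>UNIV. ennreal (Loc N a c1 c2 (mk h) j l' (l0(j := s)))))"
    by (rule infsum_cong) (simp add: loc_identity[OF m])
  also have "\<dots> = (\<Sum>\<^sub>\<infinity>l0\<in>?Z0. \<Sum>\<^sub>\<infinity>s\<in>UNIV. ennreal (wtGP N a c1 c2 (mk h) l' (l0(j := s))))"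
  proof (rule infsum_cong)
    fix l0
    have "(\<Sum>\<^sub>\<infinity>s\<in>UNIV. ennreal (wtGP N a c1 c2 (mk h) l' (l0(j := s))))
        = (\<Sum>\<^sub>\<infinity>s\<in>UNIV. ennreal (?R l0) * ennreal (Loc N a c1 c2 (mk h) j l' (l0(j := s))))"
      unfolding wtGP_rest_loc(2)[OF m]
      using Rest_nonneg[OF apos c1 c2] Loc_nonneg[OF apos c1 c2] by (simp add: ennreal_mult)
    also have "\<dots> = ennreal (?R l0) * (\<Sum>\<^sub>\<infinity>s\<in>UNIV. ennreal (Loc N a c1 c2 (mk h) j l' (l0(j := s))))"
      by (rule infsum_cmult_left_ennreal[OF cU])
    finally show "ennreal (?R l0) * (\<Sum>\<^sub>\<infinity>s\<in>UNIV. ennreal (Loc N a c1 c2 (mk h) j l' (l0(j := s))))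
       = (\<Sum>\<^sub>\<infinity>s\<in>UNIV. ennreal (wtGP N a c1 c2 (mk h) l' (l0(j := s))))" by simp
  qed
  also have "\<dots> = wtP N a c1 c2 (mk h) l'"
    unfolding wtP_def Zvec_split[OF j] ..
  finally show ?thesis .
qed

end



lemma valid_step:
  assumes "valid N h" "i \<in> {1..N}"
  shows "h i = h (i-1) \<or> h i = h (i-1) - 1"
  using assms unfolding valid_def by blast

lemma valid_nonneg:
  assumes "valid N h" "i \<le> N"
  shows "0 \<le> h i"
  using assms unfolding valid_def by blast

lemma valid_mono:
  assumes "valid N h" "i \<le> k" "k \<le> N"
  shows "h k \<le> h i \<and> h i \<le> h k + int (k - i)"
  using assms(2,3)
proof (induction k)
  case 0 then show ?case by simp
next
  case (Suc k)
  show ?case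
  proof (cases "i = Suc k")
    case True then show ?thesis by simp
  next
    case False
    then have "i \<le> k" "k \<le> N" using Suc.prems by auto
    then have IH: "h k \<le> h i \<and> h i \<le> h k + int (k - i)" using Suc.IH by blast
    have "h (Suc k) = h k \<or> h (Suc k) = h k - 1"
      using valid_step[OF assms(1), of "Suc k"] Suc.prems by simp
    moreover have "int (Suc k - i) = int (k - i) + 1" using \<open>i \<le> k\<close> by simp
    ultimately show ?thesis using IH by auto
  qed
qed

context params
begin

definition G :: "(nat \<Rightarrow> vertex) \<Rightarrow> (nat \<Rightarrow> int) \<Rightarrow> (nat \<Rightarrow> int) \<Rightarrow> (vertex \<Rightarrow> nat) \<Rightarrow> nat \<Rightarrow> int" where
  "G P h l w = (\<lambda>i. if i \<le> N then lpp N P l w (mk h i) else 0)"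

lemma P_facts:
  assumes dr: "down_right N P"
  shows "\<And>i. i \<le> N \<Longrightarrow> P i = mk (\<lambda>i. snd (P i)) i"
    and "\<And>i k. i \<le> N \<Longrightarrow> k \<le> N \<Longrightarrow> P i = P k \<Longrightarrow> i = k"
    and "\<And>i. i \<le> N \<Longrightarrow> in_strip N (P i)"
proof -
  show 1: "\<And>i. i \<le> N \<Longrightarrow> P i = mk (\<lambda>i. snd (P i)) i" using down_right_mk[OF dr] by blast
  show "\<And>i k. i \<le> N \<Longrightarrow> k \<le> N \<Longrightarrow> P i = P k \<Longrightarrow> i = k"
  proof -
    fix i k assume "i \<le> N" "k \<le> N" "P i = P k"
    then have "mk (\<lambda>i. snd (P i)) i = mk (\<lambda>i. snd (P i)) k" using 1 by metis
    then show "i = k" by (rule mk_inj)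
  qed
  show "\<And>i. i \<le> N \<Longrightarrow> in_strip N (P i)" using dr unfolding down_right_def by blast
qed

lemma move_G:
  assumes dr: "down_right N P"
    and hP: "\<And>i. i \<le> N \<Longrightarrow> snd (P i) \<le> h' i"
    and m: "mv N h' h j"
    and ne: "\<And>i. i \<le> N \<Longrightarrow> S N P l w (mk h' i) \<noteq> {}"
  shows "G P h l w = (G P h' l w)(j := Fj N j (G P h' l w) + int (w (mk h j)))"
    and "\<And>i. i \<le> N \<Longrightarrow> S N P l w (mk h i) \<noteq> {}"
proof -
  note Pf = P_facts[OF dr]
  have j: "j \<le> N" and hj: "h = h'(j := h' j + 1)" using m unfolding mv_def by auto
  let ?v = "mk h j"
  have vs: "in_strip N ?v"
  proof -
    have "0 \<le> snd (P j)" using Pf(3)[OF j] unfolding in_strip_def by simp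
    then have "0 \<le> h j" using hP[OF j] hj by simp
    then show ?thesis using j unfolding in_strip_def mk_def by simp
  qed
  have vP: "?v \<notin> P ` {..N}"
  proof
    assume "?v \<in> P ` {..N}"
    then obtain k where k: "k \<le> N" "P k = ?v" by auto
    then have "mk (\<lambda>i. snd (P i)) k = mk h j" using Pf(1) by metis
    then have "k = j" "snd (P k) = h j" using mk_inj by (auto simp: mk_def)
    then show False using hP[OF j] hj by simp
  qed
  let ?n1 = "(fst ?v - 1, snd ?v)" and ?n2 = "(fst ?v, snd ?v - 1)"
  have fin: "finite (S N P l w u)" for u by (rule S_finite) (use Pf in auto)
  have key: "S N P l w ?n1 \<union> S N P l w ?n2 \<noteq> {} \<and> Max (S N P l w ?n1 \<union> S N P l w ?n2) = Fj N j (G P h' l w)"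
  proof -
    have jN: "j = 0 \<or> j = N \<or> (0 < j \<and> j < N)" using j by auto
    moreover
    { assume j0: "j = 0"
      then have h1: "h' 1 = h' 0" using m unfolding mv_def by auto
      have "\<not> in_strip N ?n1" using j0 hj by (simp add: in_strip_def mk_def)
      then have e1: "S N P l w ?n1 = {}" by (rule S_not_strip)
      have e2: "?n2 = mk h' 1" using j0 hj h1 by (simp add: mk_def)
      have "S N P l w ?n1 \<union> S N P l w ?n2 = S N P l w (mk h' 1)" using e1 e2 by simp
      moreover have "Fj N j (G P h' l w) = lpp N P l w (mk h' 1)" using j0 N by (simp add: Fj_def G_def)
      ultimately have ?thesis using ne[of 1] N by (simp add: lpp_S) }
    moreover
    { assume jN: "j = N"
      then have h1: "h' (N - 1) = h' N + 1" using m unfolding mv_def by auto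
      have "\<not> in_strip N ?n2" using jN hj by (simp add: in_strip_def mk_def)
      then have e2: "S N P l w ?n2 = {}" by (rule S_not_strip)
      have "int (N - 1) = int N - 1" using N by simp
      then have e1: "?n1 = mk h' (N - 1)" using jN hj h1 N by (simp add: mk_def)
      have "S N P l w ?n1 \<union> S N P l w ?n2 = S N P l w (mk h' (N - 1))" using e1 e2 by simp
      moreover have "Fj N j (G P h' l w) = lpp N P l w (mk h' (N - 1))" using jN N by (simp add: Fj_def G_def)
      ultimately have ?thesis using ne[of "N - 1"] by (simp add: lpp_S) }
    moreover
    { assume jb: "0 < j \<and> j < N"
      then have h1: "h' (j - 1) = h' j + 1" and h2: "h' (Suc j) = h' j" using m unfolding mv_def by auto
      have "int (j - 1) = int j - 1" using jb by simp
      then have e1: "?n1 = mk h' (j - 1)" using jb hj h1 by (simp add: mk_def)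
      have e2: "?n2 = mk h' (Suc j)" using jb hj h2 by (simp add: mk_def)
      have ne1: "S N P l w (mk h' (j - 1)) \<noteq> {}" and ne2: "S N P l w (mk h' (Suc j)) \<noteq> {}"
        using ne jb by auto
      have "Max (S N P l w (mk h' (j - 1)) \<union> S N P l w (mk h' (Suc j))) =
            max (Max (S N P l w (mk h' (j - 1)))) (Max (S N P l w (mk h' (Suc j))))"
        by (rule Max_Un) (use fin ne1 ne2 in auto)
      moreover have "Fj N j (G P h' l w) = max (lpp N P l w (mk h' (j - 1))) (lpp N P l w (mk h' (Suc j)))"
      proof -
        have "j - 1 \<le> N" "Suc j \<le> N" "j \<noteq> 0" "j \<noteq> N" using jb by auto
        then show ?thesis by (simp add: Fj_def G_def)
      qed
      ultimately have ?thesis using e1 e2 ne1 by (simp add: lpp_S) }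
    ultimately show ?thesis by blast
  qed
  have lv: "lpp N P l w ?v = Fj N j (G P h' l w) + int (w ?v)"
    using lpp_rec[of N P, OF _ _ vs vP] key Pf by auto
  show "G P h l w = (G P h' l w)(j := Fj N j (G P h' l w) + int (w (mk h j)))"
  proof
    fix i
    show "G P h l w i = ((G P h' l w)(j := Fj N j (G P h' l w) + int (w (mk h j)))) i"
    proof (cases "i = j")
      case True then show ?thesis using lv j by (simp add: G_def)
    next
      case False
      then have "mk h i = mk h' i" using hj by (simp add: mk_def)
      then show ?thesis using False by (simp add: G_def)
    qed
  qed
  show "\<And>i. i \<le> N \<Longrightarrow> S N P l w (mk h i) \<noteq> {}"
  proof -
    fix i assume i: "i \<le> N"
    show "S N P l w (mk h i) \<noteq> {}"
    proof (cases "i = j")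
      case True
      then show ?thesis using S_decomp[OF vs vP, of l w] key by auto
    next
      case False
      then have "mk h i = mk h' i" using hj by (simp add: mk_def)
      then show ?thesis using ne[OF i] by simp
    qed
  qed
qed

end



lemma descent:
  assumes N: "1 \<le> N" and vP: "valid N hP" and vh: "valid N h" and le: "\<And>i. i \<le> N \<Longrightarrow> hP i \<le> h i"
    and ex: "\<exists>i\<le>N. hP i < h i"
  shows "\<exists>j h'. mv N h' h j \<and> valid N h' \<and> (\<forall>i\<le>N. hP i \<le> h' i \<and> h' i \<le> h i) \<and>
            (\<Sum>i\<le>N. nat (h' i - hP i)) < (\<Sum>i\<le>N. nat (h i - hP i))"
proof -
  let ?S = "{i. i \<le> N \<and> hP i < h i}"
  let ?f = "\<lambda>i. 2 * h i + int i"
  have finS: "finite ?S" by simp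
  have neS: "?S \<noteq> {}" using ex by auto
  obtain j where jS: "j \<in> ?S" and jmax: "\<And>i. i \<in> ?S \<Longrightarrow> ?f i \<le> ?f j"
  proof -
    have "Max (?f ` ?S) \<in> ?f ` ?S" using finS neS by (intro Max_in) auto
    then obtain j where "j \<in> ?S" "?f j = Max (?f ` ?S)" by auto
    moreover have "\<And>i. i \<in> ?S \<Longrightarrow> ?f i \<le> Max (?f ` ?S)" using finS by auto
    ultimately show ?thesis using that by metis
  qed
  have jN: "j \<le> N" and jlt: "hP j < h j" using jS by auto
  have A: "h (j - 1) = h j" if "0 < j"
  proof (rule ccontr)
    assume "h (j - 1) \<noteq> h j"
    then have e: "h (j - 1) = h j + 1" using valid_step[OF vh, of j] that jN by auto
    have "hP j = hP (j - 1) \<or> hP j = hP (j - 1) - 1" using valid_step[OF vP, of j] that jN by auto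
    then have "hP (j - 1) < h (j - 1)" using e jlt by auto
    then have "j - 1 \<in> ?S" using jN by auto
    then have "?f (j - 1) \<le> ?f j" by (rule jmax)
    moreover have "int (j - 1) = int j - 1" using that by simp
    ultimately show False using e by simp
  qed
  have B: "h (Suc j) = h j - 1" if "j < N"
  proof (rule ccontr)
    assume "h (Suc j) \<noteq> h j - 1"
    then have e: "h (Suc j) = h j" using valid_step[OF vh, of "Suc j"] that by auto
    have "hP (Suc j) = hP j \<or> hP (Suc j) = hP j - 1" using valid_step[OF vP, of "Suc j"] that by auto
    then have "hP (Suc j) < h (Suc j)" using e jlt by auto
    then have "Suc j \<in> ?S" using that by auto
    then have "?f (Suc j) \<le> ?f j" by (rule jmax)
    then show False using e by simp
  qed
  define h' where "h' = h(j := h j - 1)"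
  have hh': "h = h'(j := h' j + 1)" unfolding h'_def by (simp add: fun_eq_iff)
  have mvj: "mv N h' h j"
    unfolding mv_def
  proof (intro conjI impI)
    show "j \<le> N" by (rule jN)
    show "h = h'(j := h' j + 1)" by (rule hh')
  next
    assume j0: "j = 0"
    then have "h 1 = h 0 - 1" using B N by auto
    then show "h' 1 = h' 0" using j0 by (simp add: h'_def)
  next
    assume jN': "j = N"
    then have "h (N - 1) = h N" using A N by auto
    moreover have "N - 1 \<noteq> N" using N by simp
    ultimately show "h' (N - 1) = h' N + 1" using jN' by (simp add: h'_def)
  next
    assume jb: "0 < j \<and> j < N"
    have "j - 1 \<noteq> j" using jb by auto
    then show "h' (j - 1) = h' j + 1" using A jb by (simp add: h'_def)
    show "h' (Suc j) = h' j" using B jb by (simp add: h'_def)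
  qed
  have vh': "valid N h'"
    unfolding valid_def
  proof (intro conjI allI impI ballI)
    fix i assume i: "i \<le> N"
    show "0 \<le> h' i"
    proof (cases "i = j")
      case True then show ?thesis using jlt valid_nonneg[OF vP jN] by (simp add: h'_def)
    next
      case False then show ?thesis using valid_nonneg[OF vh i] by (simp add: h'_def)
    qed
  next
    fix i assume i: "i \<in> {1..N}"
    show "h' i = h' (i - 1) \<or> h' i = h' (i - 1) - 1"
    proof (cases "i = j")
      case True
      then have "h (j - 1) = h j" using A i by auto
      then show ?thesis using True i by (simp add: h'_def)
    next
      case False
      show ?thesis
      proof (cases "i = Suc j")
        case True
        then have "h i = h j - 1" using B i by auto
        then show ?thesis using True by (simp add: h'_def)
      next
        case False
        then have "i - 1 \<noteq> j" using i by auto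
        then show ?thesis using \<open>i \<noteq> j\<close> valid_step[OF vh i] by (simp add: h'_def)
      qed
    qed
  qed
  have bnd: "\<forall>i\<le>N. hP i \<le> h' i \<and> h' i \<le> h i" using le jlt by (auto simp: h'_def)
  have dec: "(\<Sum>i\<le>N. nat (h' i - hP i)) < (\<Sum>i\<le>N. nat (h i - hP i))"
  proof (rule sum_strict_mono_ex1)
    show "finite {..N}" by simp
    show "\<forall>i\<in>{..N}. nat (h' i - hP i) \<le> nat (h i - hP i)" by (auto simp: h'_def)
    show "\<exists>i\<in>{..N}. nat (h' i - hP i) < nat (h i - hP i)" using jN jlt by (auto simp: h'_def intro!: bexI[of _ j])
  qed
  show ?thesis using mvj vh' bnd dec by blast
qed

context params
begin

lemma wtGP_cong:
  assumes "\<And>i. i \<le> N \<Longrightarrow> P i = P' i"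
  shows "wtGP N a c1 c2 P l1 l2 = wtGP N a c1 c2 P' l1 l2"
proof -
  have "(\<Prod>i\<in>{1..N}. ef a P l1 l2 i) = (\<Prod>i\<in>{1..N}. ef a P' l1 l2 i)"
    by (rule prod.cong) (auto intro!: ef_cong assms)
  then show ?thesis unfolding wtGP_ef by simp
qed

lemma wtP_cong:
  assumes "\<And>i. i \<le> N \<Longrightarrow> P i = P' i"
  shows "wtP N a c1 c2 P l = wtP N a c1 c2 P' l"
  unfolding wtP_def using wtGP_cong[OF assms] by simp

lemma region_finite: "finite (region N Q)"
proof -
  define B where "B = Max ((\<lambda>j. fst (Q j)) ` {..N})"
  have "region N Q \<subseteq> {0..B} \<times> {0..B}"
  proof
    fix v assume "v \<in> region N Q"
    then obtain j where v: "in_strip N v" "j \<le> N" "fst v \<le> fst (Q j)" "snd v \<le> snd (Q j)"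
      unfolding region_def by auto
    have "fst (Q j) \<le> B" unfolding B_def using v(2) by (intro Max_ge) auto
    then show "v \<in> {0..B} \<times> {0..B}" using v unfolding in_strip_def by (cases v) auto
  qed
  then show ?thesis by (rule finite_subset) simp
qed

definition K :: "(nat \<Rightarrow> vertex) \<Rightarrow> (nat \<Rightarrow> vertex) \<Rightarrow> (nat \<Rightarrow> int) \<Rightarrow> (nat \<Rightarrow> int) \<Rightarrow> (nat \<Rightarrow> int) \<Rightarrow> ennreal" where
  "K P Q h l' l = emeasure (measure_pmf (weights N a c1 c2 Q)) {w. G P h l w = l'}"

definition Claim :: "(nat \<Rightarrow> vertex) \<Rightarrow> (nat \<Rightarrow> vertex) \<Rightarrow> (nat \<Rightarrow> int) \<Rightarrow> bool" where
  "Claim P Q h \<longleftrightarrow> (\<forall>l w i. i \<le> N \<longrightarrow> S N P l w (mk h i) \<noteq> {}) \<and>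
     (\<forall>l w i k t. i \<le> N \<longrightarrow> h i < k \<longrightarrow> G P h l (w((k + int i, k) := t)) = G P h l w) \<and>
     (\<forall>l'\<in>Zvec N. (\<Sum>\<^sub>\<infinity>l\<in>Zvec N. K P Q h l' l * wtP N a c1 c2 P l) = wtP N a c1 c2 (mk h) l')"

lemma claim_base:
  assumes dr: "down_right N P" and eq: "\<And>i. i \<le> N \<Longrightarrow> h i = snd (P i)"
  shows "Claim P Q h"
proof -
  note Pf = P_facts[OF dr]
  have mkP: "mk h i = P i" if "i \<le> N" for i
    using Pf(1)[OF that] eq[OF that] by (simp add: mk_def)
  have SP: "S N P l w (mk h i) = {l i}" if "i \<le> N" for l w i
    unfolding mkP[OF that] by (rule S_on_P) (use Pf that in auto)
  have GP: "G P h l w = (\<lambda>i. if i \<le> N then l i else 0)" for l w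
    unfolding G_def by (auto simp: lpp_S SP)
  have 3: "(\<Sum>\<^sub>\<infinity>l\<in>Zvec N. K P Q h l' l * wtP N a c1 c2 P l) = wtP N a c1 c2 (mk h) l'" if l': "l' \<in> Zvec N" for l'
  proof -
    have Kl: "K P Q h l' l = (if l = l' then 1 else 0)" if l: "l \<in> Zvec N" for l
    proof -
      have "(\<lambda>i. if i \<le> N then l i else 0) = l" using l unfolding Zvec_def by (auto simp: fun_eq_iff)
      then have "{w. G P h l w = l'} = (if l = l' then UNIV else {})" unfolding GP by auto
      then show ?thesis unfolding K_def by (simp add: measure_pmf.emeasure_space_1)
    qed
    have "(\<Sum>\<^sub>\<infinity>l\<in>Zvec N. K P Q h l' l * wtP N a c1 c2 P l) = K P Q h l' l' * wtP N a c1 c2 P l'"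
      by (rule infsum_single') (use l' Kl in auto)
    also have "\<dots> = wtP N a c1 c2 P l'" using Kl[OF l'] by simp
    also have "\<dots> = wtP N a c1 c2 (mk h) l'" by (rule wtP_cong) (simp add: mkP)
    finally show ?thesis .
  qed
  show ?thesis unfolding Claim_def using SP GP 3 by auto
qed

lemma claim_step:
  assumes dr: "down_right N P" and drQ: "down_right N Q"
    and hP: "\<And>i. i \<le> N \<Longrightarrow> snd (P i) \<le> h' i"
    and hQ: "\<And>i. i \<le> N \<Longrightarrow> h i \<le> snd (Q i)"
    and m: "mv N h' h j" and IH: "Claim P Q h'"
  shows "Claim P Q h"
proof -
  have j: "j \<le> N" and hj: "h = h'(j := h' j + 1)" using m unfolding mv_def by auto
  have ne: "\<And>i. i \<le> N \<Longrightarrow> S N P l w (mk h' i) \<noteq> {}" for l w using IH unfolding Claim_def by blast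
  have ind: "\<And>i k t. i \<le> N \<Longrightarrow> h' i < k \<Longrightarrow> G P h' l (w((k + int i, k) := t)) = G P h' l w" for l w
    using IH unfolding Claim_def by blast
  have IH3: "\<And>l'. l' \<in> Zvec N \<Longrightarrow> (\<Sum>\<^sub>\<infinity>l\<in>Zvec N. K P Q h' l' l * wtP N a c1 c2 P l) = wtP N a c1 c2 (mk h') l'"
    using IH unfolding Claim_def by blast
  have MG: "G P h l w = (G P h' l w)(j := Fj N j (G P h' l w) + int (w (mk h j)))" for l w
    by (rule move_G(1)[OF dr hP m ne]) auto
  have 1: "\<And>i. i \<le> N \<Longrightarrow> S N P l w (mk h i) \<noteq> {}" for l w
    by (rule move_G(2)[OF dr hP m ne]) auto
  let ?v = "mk h j"
  have v_eq: "?v = (h' j + 1 + int j, h' j + 1)" using hj by (simp add: mk_def)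
  have indv: "G P h' l (w(?v := t)) = G P h' l w" for l w t
    using ind[OF j, of "h' j + 1"] v_eq by simp
  have 2: "G P h l (w((k + int i, k) := t)) = G P h l w" if "i \<le> N" "h i < k" for l w i k t
  proof -
    have "h' i < k" using that hj by (cases "i = j") auto
    then have g: "G P h' l (w((k + int i, k) := t)) = G P h' l w" using ind that by blast
    have "(k + int i, k) \<noteq> ?v" using that hj by (auto simp: mk_def)
    then have "(w((k + int i, k) := t)) ?v = w ?v" by simp
    then show ?thesis unfolding MG g by simp
  qed
  have vR: "?v \<in> region N Q"
  proof -
    have Qj: "Q j = mk (\<lambda>i. snd (Q i)) j" using down_right_mk[OF drQ j] .
    have fQ: "fst (Q j) = snd (Q j) + int j" using Qj unfolding mk_def by (metis fst_conv)
    have "0 \<le> h j" using hP[OF j] hj P_facts(3)[OF dr j] by (simp add: in_strip_def)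
    then have "in_strip N ?v" using j by (simp add: in_strip_def mk_def)
    moreover have "fst ?v \<le> fst (Q j)" "snd ?v \<le> snd (Q j)" using hQ[OF j] hj fQ by (auto simp: mk_def)
    ultimately show ?thesis unfolding region_def using j by auto
  qed
  have Kstep: "K P Q h l' l = (\<Sum>\<^sub>\<infinity>x\<in>UNIV. K P Q h' (l'(j := x)) l * gp (Geom (qpar N a c1 c2 ?v)) (l' j - Fj N j (l'(j := x))))" for l' l
  proof -
    have "K P Q h l' l = emeasure (measure_pmf (Pi_pmf (region N Q) 0 (\<lambda>v. Geom (qpar N a c1 c2 v))))
        {w. (G P h' l w)(j := Fj N j (G P h' l w) + int (w ?v)) = l'}"
      unfolding K_def weights_def MG ..
    also have "\<dots> = (\<Sum>\<^sub>\<infinity>x\<in>UNIV. emeasure (measure_pmf (Pi_pmf (region N Q) 0 (\<lambda>v. Geom (qpar N a c1 c2 v)))) {w. G P h' l w = l'(j := x)} *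
                 gp (Geom (qpar N a c1 c2 ?v)) (l' j - Fj N j (l'(j := x))))"
      by (rule kernel_step[OF region_finite vR]) (rule indv)
    finally show ?thesis unfolding K_def weights_def .
  qed
  have 3: "(\<Sum>\<^sub>\<infinity>l\<in>Zvec N. K P Q h l' l * wtP N a c1 c2 P l) = wtP N a c1 c2 (mk h) l'" if l': "l' \<in> Zvec N" for l'
  proof -
    let ?g = "\<lambda>x. gp (Geom (qpar N a c1 c2 ?v)) (l' j - Fj N j (l'(j := x)))"
    have cU: "countable (UNIV :: int set)" by simp
    have "(\<Sum>\<^sub>\<infinity>l\<in>Zvec N. K P Q h l' l * wtP N a c1 c2 P l)
        = (\<Sum>\<^sub>\<infinity>l\<in>Zvec N. \<Sum>\<^sub>\<infinity>x\<in>UNIV. K P Q h' (l'(j := x)) l * ?g x * wtP N a c1 c2 P l)"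
      unfolding Kstep by (rule infsum_cong) (rule infsum_cmult_right_ennreal[OF cU, symmetric])
    also have "\<dots> = (\<Sum>\<^sub>\<infinity>x\<in>UNIV. \<Sum>\<^sub>\<infinity>l\<in>Zvec N. K P Q h' (l'(j := x)) l * ?g x * wtP N a c1 c2 P l)"
      by (rule infsum_swap_ennreal[OF countable_Zvec cU])
    also have "\<dots> = (\<Sum>\<^sub>\<infinity>x\<in>UNIV. ?g x * (\<Sum>\<^sub>\<infinity>l\<in>Zvec N. K P Q h' (l'(j := x)) l * wtP N a c1 c2 P l))"
    proof (rule infsum_cong)
      fix x
      show "(\<Sum>\<^sub>\<infinity>l\<in>Zvec N. K P Q h' (l'(j := x)) l * ?g x * wtP N a c1 c2 P l) =
            ?g x * (\<Sum>\<^sub>\<infinity>l\<in>Zvec N. K P Q h' (l'(j := x)) l * wtP N a c1 c2 P l)"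
        by (subst infsum_cmult_left_ennreal[OF countable_Zvec, symmetric]) (simp add: mult_ac)
    qed
    also have "\<dots> = (\<Sum>\<^sub>\<infinity>x\<in>UNIV. ?g x * wtP N a c1 c2 (mk h') (l'(j := x)))"
    proof (rule infsum_cong)
      fix x
      have "l'(j := x) \<in> Zvec N" using l' j by (auto simp: Zvec_def)
      then show "?g x * (\<Sum>\<^sub>\<infinity>l\<in>Zvec N. K P Q h' (l'(j := x)) l * wtP N a c1 c2 P l) = ?g x * wtP N a c1 c2 (mk h') (l'(j := x))"
        using IH3 by simp
    qed
    also have "\<dots> = wtP N a c1 c2 (mk h) l'" by (rule local_wtP[OF m])
    finally show ?thesis .
  qed
  show ?thesis unfolding Claim_def
  proof (intro conjI allI impI ballI)
    fix l w i assume "i \<le> N" then show "S N P l w (mk h i) \<noteq> {}" by (rule 1)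
  next
    fix l w i k t assume "i \<le> N" "h i < k" then show "G P h l (w((k + int i, k) := t)) = G P h l w" by (rule 2)
  next
    fix l' assume "l' \<in> Zvec N" then show "(\<Sum>\<^sub>\<infinity>l\<in>Zvec N. K P Q h l' l * wtP N a c1 c2 P l) = wtP N a c1 c2 (mk h) l'" by (rule 3)
  qed
qed

end



lemma chain_mono:
  assumes "upright_chain N (x # xs)" "n < length (x # xs)"
  shows "fst x \<le> fst ((x # xs) ! n) \<and> snd x \<le> snd ((x # xs) ! n)"
  using assms(2)
proof (induction n)
  case 0 then show ?case by simp
next
  case (Suc n)
  then have "n < length (x # xs)" by simp
  then have IH: "fst x \<le> fst ((x # xs) ! n) \<and> snd x \<le> snd ((x # xs) ! n)" using Suc.IH by blast
  have "(x # xs) ! Suc n = (fst ((x # xs) ! n) + 1, snd ((x # xs) ! n)) \<or>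
        (x # xs) ! Suc n = (fst ((x # xs) ! n), snd ((x # xs) ! n) + 1)"
    using assms(1) Suc.prems unfolding upright_chain_def by blast
  then show ?case using IH by auto
qed

lemma chain_last_mono:
  assumes "upright_chain N (x # xs)"
  shows "fst x \<le> fst (last (x # xs)) \<and> snd x \<le> snd (last (x # xs))"
proof -
  have "last (x # xs) = (x # xs) ! length xs" by (simp add: last_conv_nth)
  then show ?thesis using chain_mono[OF assms, of "length xs"] by simp
qed

lemma above_le:
  assumes dr: "down_right N P" and drQ: "down_right N Q" and ab: "path_above N P Q" and j: "j \<le> N"
  shows "snd (P j) \<le> snd (Q j)"
proof -
  obtain i xs where i: "i \<le> N" and c: "upright_chain N (P i # xs)" and l: "last (P i # xs) = Q j"
    using ab j unfolding path_above_def above_def by blast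
  have m: "fst (P i) \<le> fst (Q j)" "snd (P i) \<le> snd (Q j)" using chain_last_mono[OF c] l by auto
  have Pi: "fst (P i) = snd (P i) + int i" using down_right_mk[OF dr i] unfolding mk_def by (metis fst_conv)
  have Qj: "fst (Q j) = snd (Q j) + int j" using down_right_mk[OF drQ j] unfolding mk_def by (metis fst_conv)
  have vP: "valid N (\<lambda>i. snd (P i))" by (rule down_right_valid[OF dr])
  show ?thesis
  proof (cases "i \<le> j")
    case True
    then have "snd (P j) \<le> snd (P i)" using valid_mono[OF vP True j] by simp
    then show ?thesis using m by simp
  next
    case False
    then have "snd (P j) \<le> snd (P i) + int (i - j)" using valid_mono[OF vP _ i, of j] by simp
    moreover have "int (i - j) = int i - int j" using False by simp
    ultimately show ?thesis using m Pi Qj by simp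
  qed
qed

context params
begin

lemma main_claim:
  assumes dr: "down_right N P" and drQ: "down_right N Q" and ab: "\<And>i. i \<le> N \<Longrightarrow> snd (P i) \<le> snd (Q i)"
  shows "Claim P Q (\<lambda>i. snd (Q i))"
proof -
  let ?hP = "\<lambda>i. snd (P i)" and ?hQ = "\<lambda>i. snd (Q i)"
  have vP: "valid N ?hP" by (rule down_right_valid[OF dr])
  have gen: "\<forall>h. (\<Sum>i\<le>N. nat (h i - ?hP i)) = n \<longrightarrow> valid N h \<longrightarrow> (\<forall>i\<le>N. ?hP i \<le> h i \<and> h i \<le> ?hQ i) \<longrightarrow> Claim P Q h" for n
  proof (induction n rule: less_induct)
    case (less n)
    show ?case
    proof (intro allI impI)
      fix h assume d: "(\<Sum>i\<le>N. nat (h i - ?hP i)) = n" and vh: "valid N h" and b: "\<forall>i\<le>N. ?hP i \<le> h i \<and> h i \<le> ?hQ i"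
      show "Claim P Q h"
      proof (cases "\<exists>i\<le>N. ?hP i < h i")
        case True
        obtain j h' where mvj: "mv N h' h j" and vh': "valid N h'" and b': "\<forall>i\<le>N. ?hP i \<le> h' i \<and> h' i \<le> h i"
          and dec: "(\<Sum>i\<le>N. nat (h' i - ?hP i)) < (\<Sum>i\<le>N. nat (h i - ?hP i))"
          using descent[OF N vP vh _ True] b by blast
        have dec': "(\<Sum>i\<le>N. nat (h' i - ?hP i)) < n" using dec d by simp
        have b'': "\<forall>i\<le>N. ?hP i \<le> h' i \<and> h' i \<le> ?hQ i"
        proof (intro allI impI)
          fix i assume "i \<le> N"
          then show "?hP i \<le> h' i \<and> h' i \<le> ?hQ i" using b b' by (meson order_trans)
        qed
        have C': "Claim P Q h'"
          using less.IH[OF dec'] vh' b'' by blast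
        show ?thesis
        proof (rule claim_step[OF dr drQ _ _ mvj C'])
          fix i assume "i \<le> N" then show "snd (P i) \<le> h' i" using b' by blast
        next
          fix i assume "i \<le> N" then show "h i \<le> snd (Q i)" using b by blast
        qed
      next
        case False
        have "\<And>i. i \<le> N \<Longrightarrow> h i = ?hP i"
        proof -
          fix i assume i: "i \<le> N"
          then have "?hP i \<le> h i" using b by blast
          moreover have "\<not> ?hP i < h i" using False i by blast
          ultimately show "h i = ?hP i" by simp
        qed
        then show ?thesis by (rule claim_base[OF dr])
      qed
    qed
  qed
  have vQ: "valid N ?hQ" by (rule down_right_valid[OF drQ])
  have bQ: "\<forall>i\<le>N. ?hP i \<le> ?hQ i \<and> ?hQ i \<le> ?hQ i" using ab by simp
  have "(\<Sum>i\<le>N. nat (?hQ i - ?hP i)) = (\<Sum>i\<le>N. nat (?hQ i - ?hP i)) \<longrightarrow> valid N ?hQ \<longrightarrow> (\<forall>i\<le>N. ?hP i \<le> ?hQ i \<and> ?hQ i \<le> ?hQ i) \<longrightarrow> Claim P Q ?hQ"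
    using gen by blast
  then show ?thesis using vQ bQ by blast
qed

lemma U_K:
  assumes drQ: "down_right N Q" and l': "l' \<in> Zvec N"
  shows "ennreal (U N a c1 c2 P Q l' l) = K P Q (\<lambda>i. snd (Q i)) l' l"
proof -
  have Qm: "\<And>i. i \<le> N \<Longrightarrow> mk (\<lambda>i. snd (Q i)) i = Q i" using down_right_mk[OF drQ] by metis
  have "{w. \<forall>j\<le>N. lpp N P l w (Q j) = l' j} = {w. G P (\<lambda>i. snd (Q i)) l w = l'}"
  proof (intro Collect_cong iffI)
    fix w assume A: "\<forall>j\<le>N. lpp N P l w (Q j) = l' j"
    show "G P (\<lambda>i. snd (Q i)) l w = l'"
    proof
      fix i show "G P (\<lambda>i. snd (Q i)) l w i = l' i"
      proof (cases "i \<le> N")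
        case True
        then have "G P (\<lambda>i. snd (Q i)) l w i = lpp N P l w (Q i)" using Qm[OF True] by (simp add: G_def)
        then show ?thesis using A True by simp
      next
        case False
        then show ?thesis using l' unfolding G_def Zvec_def by simp
      qed
    qed
  next
    fix w assume A: "G P (\<lambda>i. snd (Q i)) l w = l'"
    show "\<forall>j\<le>N. lpp N P l w (Q j) = l' j"
    proof (intro allI impI)
      fix j assume "j \<le> N"
      then have "G P (\<lambda>i. snd (Q i)) l w j = lpp N P l w (Q j)" using Qm by (simp add: G_def)
      then show "lpp N P l w (Q j) = l' j" using A by simp
    qed
  qed
  then show ?thesis unfolding U_def K_def by (simp add: measure_pmf.emeasure_eq_measure)
qed

lemma part1:
  assumes dr: "down_right N P" and drQ: "down_right N Q" and ab: "path_above N P Q"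
  shows "\<forall>l'\<in>Zvec N. (\<Sum>\<^sub>\<infinity>l\<in>Zvec N. ennreal (U N a c1 c2 P Q l' l) * wtP N a c1 c2 P l) = wtP N a c1 c2 Q l'"
proof
  fix l' assume l': "l' \<in> Zvec N"
  have C: "Claim P Q (\<lambda>i. snd (Q i))" by (rule main_claim[OF dr drQ above_le[OF dr drQ ab]])
  have "(\<Sum>\<^sub>\<infinity>l\<in>Zvec N. ennreal (U N a c1 c2 P Q l' l) * wtP N a c1 c2 P l) =
        (\<Sum>\<^sub>\<infinity>l\<in>Zvec N. K P Q (\<lambda>i. snd (Q i)) l' l * wtP N a c1 c2 P l)"
    using U_K[OF drQ l'] by simp
  also have "\<dots> = wtP N a c1 c2 (mk (\<lambda>i. snd (Q i))) l'" using C l' unfolding Claim_def by blast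
  also have "\<dots> = wtP N a c1 c2 Q l'"
    by (rule wtP_cong) (use down_right_mk[OF drQ] in metis)
  finally show "(\<Sum>\<^sub>\<infinity>l\<in>Zvec N. ennreal (U N a c1 c2 P Q l' l) * wtP N a c1 c2 P l) = wtP N a c1 c2 Q l'" .
qed

end



definition phi :: "nat \<Rightarrow> (nat \<Rightarrow> int) \<times> int \<Rightarrow> nat \<Rightarrow> int" where
  "phi N z = (\<lambda>j. if j \<le> N then fst z j + snd z else 0)"

lemma phi_bij: "bij_betw (phi N) (Lvec N \<times> UNIV) (Zvec N)"
proof (rule bij_betwI[where g="\<lambda>l. ((\<lambda>j. if j \<le> N then l j - l 0 else 0), l 0)"])
  show "phi N \<in> Lvec N \<times> UNIV \<rightarrow> Zvec N" by (auto simp: phi_def Zvec_def)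
  show "(\<lambda>l. ((\<lambda>j. if j \<le> N then l j - l 0 else 0), l 0)) \<in> Zvec N \<rightarrow> Lvec N \<times> UNIV"
    by (auto simp: Lvec_def)
  show "\<And>z. z \<in> Lvec N \<times> UNIV \<Longrightarrow> ((\<lambda>j. if j \<le> N then phi N z j - phi N z 0 else 0), phi N z 0) = z"
    by (auto simp: phi_def Lvec_def fun_eq_iff)
  show "\<And>l. l \<in> Zvec N \<Longrightarrow> phi N ((\<lambda>j. if j \<le> N then l j - l 0 else 0), l 0) = l"
    by (auto simp: phi_def Zvec_def fun_eq_iff)
qed

lemma countable_Lvec: "countable (Lvec N)"
  by (rule countable_subset[OF _ countable_Zvec]) (auto simp: Lvec_def Zvec_def)

lemma sum_phi:
  fixes g :: "(nat \<Rightarrow> int) \<Rightarrow> ennreal"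
  shows "(\<Sum>\<^sub>\<infinity>L\<in>Lvec N. \<Sum>\<^sub>\<infinity>x\<in>UNIV. g (phi N (L, x))) = (\<Sum>\<^sub>\<infinity>l\<in>Zvec N. g l)"
proof -
  have "(\<Sum>\<^sub>\<infinity>l\<in>Zvec N. g l) = (\<Sum>\<^sub>\<infinity>z\<in>Lvec N \<times> UNIV. g (phi N z))"
    using infsum_reindex_bij_betw[OF phi_bij, of g] by simp
  also have "\<dots> = (\<Sum>\<^sub>\<infinity>L\<in>Lvec N. \<Sum>\<^sub>\<infinity>x\<in>UNIV. g (phi N (L, x)))"
    by (rule infsum_Sigma_ennreal[OF countable_Lvec]) simp
  finally show ?thesis by simp
qed

lemma infsum_uminus_int:
  fixes g :: "int \<Rightarrow> ennreal"
  shows "(\<Sum>\<^sub>\<infinity>x\<in>UNIV. g (- x)) = (\<Sum>\<^sub>\<infinity>x\<in>UNIV. g x)"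
proof -
  have b: "bij_betw uminus (UNIV :: int set) UNIV" by (rule bij_betwI[where g=uminus]) auto
  show ?thesis using infsum_reindex_bij_betw[OF b, of g] by simp
qed

context params
begin

lemma wtGP_cong_l:
  assumes "\<And>i. i \<le> N \<Longrightarrow> l1 i = l1' i + c" "\<And>i. i \<le> N \<Longrightarrow> l2 i = l2' i + c"
  shows "wtGP N a c1 c2 P l1 l2 = wtGP N a c1 c2 P l1' l2'"
proof -
  have ul: "up P i \<le> N" "low P i \<le> N" if "i \<in> {1..N}" for i
    using that unfolding up_def low_def by auto
  have "(\<Prod>i\<in>{1..N}. ef a P l1 l2 i) = (\<Prod>i\<in>{1..N}. ef a P l1' l2' i)"
  proof (rule prod.cong)
    fix i assume i: "i \<in> {1..N}"
    show "ef a P l1 l2 i = ef a P l1' l2' i"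
      unfolding ef_def using assms ul[OF i] by simp
  qed simp
  then show ?thesis unfolding wtGP_ef using assms[of 0] assms[of N] by simp
qed

lemma wtP_shift:
  assumes "\<And>i. i \<le> N \<Longrightarrow> l1 i = l1' i + c"
  shows "wtP N a c1 c2 P l1 = wtP N a c1 c2 P l1'"
proof -
  let ?sh = "\<lambda>l. (\<lambda>i. if i \<le> N then l i + c else 0) :: nat \<Rightarrow> int"
  have b: "bij_betw ?sh (Zvec N) (Zvec N)"
    by (rule bij_betwI[where g="\<lambda>l. (\<lambda>i. if i \<le> N then l i - c else 0)"]) (auto simp: Zvec_def fun_eq_iff)
  have "wtP N a c1 c2 P l1 = (\<Sum>\<^sub>\<infinity>l2\<in>Zvec N. ennreal (wtGP N a c1 c2 P l1 (?sh l2)))"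
    unfolding wtP_def using infsum_reindex_bij_betw[OF b, of "\<lambda>l2. ennreal (wtGP N a c1 c2 P l1 l2)"] by simp
  also have "\<dots> = wtP N a c1 c2 P l1'"
    unfolding wtP_def by (rule infsum_cong) (rule arg_cong[where f=ennreal], rule wtGP_cong_l, use assms in auto)
  finally show ?thesis .
qed

lemma S_shift:
  assumes "\<And>i. i \<le> N \<Longrightarrow> l1 i = l i + c"
  shows "S N P l1 w v = (\<lambda>s. s + c) ` S N P l w v"
proof
  show "S N P l1 w v \<subseteq> (\<lambda>s. s + c) ` S N P l w v"
  proof
    fix s assume "s \<in> S N P l1 w v"
    then obtain j xs where s: "s = l1 j + (\<Sum>u\<leftarrow>xs. int (w u))" and c: "j \<le> N \<and> upright_chain N (P j # xs) \<and> last (P j # xs) = v \<and> (\<forall>u\<in>set xs. u \<notin> P ` {..N})"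
      unfolding S_def by blast
    have "l j + (\<Sum>u\<leftarrow>xs. int (w u)) \<in> S N P l w v" unfolding S_def using c by blast
    moreover have "s = l j + (\<Sum>u\<leftarrow>xs. int (w u)) + c" using s c assms by simp
    ultimately show "s \<in> (\<lambda>s. s + c) ` S N P l w v" by blast
  qed
next
  show "(\<lambda>s. s + c) ` S N P l w v \<subseteq> S N P l1 w v"
  proof
    fix s assume "s \<in> (\<lambda>s. s + c) ` S N P l w v"
    then obtain t where t: "t \<in> S N P l w v" and s: "s = t + c" by blast
    then obtain j xs where t': "t = l j + (\<Sum>u\<leftarrow>xs. int (w u))" and c: "j \<le> N \<and> upright_chain N (P j # xs) \<and> last (P j # xs) = v \<and> (\<forall>u\<in>set xs. u \<notin> P ` {..N})"
      unfolding S_def by blast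
    have "s = l1 j + (\<Sum>u\<leftarrow>xs. int (w u))" using s t' c assms by simp
    then show "s \<in> S N P l1 w v" unfolding S_def using c by blast
  qed
qed

lemma U_shift:
  assumes dr: "down_right N P" and drQ: "down_right N Q" and ab: "path_above N P Q"
    and s1: "\<And>i. i \<le> N \<Longrightarrow> l1' i = l' i + c" and s2: "\<And>i. i \<le> N \<Longrightarrow> l1 i = l i + c"
  shows "U N a c1 c2 P Q l1' l1 = U N a c1 c2 P Q l' l"
proof -
  have C: "Claim P Q (\<lambda>i. snd (Q i))" by (rule main_claim[OF dr drQ above_le[OF dr drQ ab]])
  have Qm: "\<And>i. i \<le> N \<Longrightarrow> mk (\<lambda>i. snd (Q i)) i = Q i" using down_right_mk[OF drQ] by metis
  have ne: "S N P l w (Q j) \<noteq> {}" if "j \<le> N" for w j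
  proof -
    have "S N P l w (mk (\<lambda>i. snd (Q i)) j) \<noteq> {}" using C that unfolding Claim_def by blast
    then show ?thesis using Qm[OF that] by simp
  qed
  have fin: "finite (S N P l w v)" for w v by (rule S_finite) (use P_facts[OF dr] in auto)
  have lp: "lpp N P l1 w (Q j) = lpp N P l w (Q j) + c" if "j \<le> N" for w j
  proof -
    have "lpp N P l1 w (Q j) = Max ((\<lambda>s. s + c) ` S N P l w (Q j))"
      using S_shift[OF s2, where P=P and w=w and v="Q j"] by (simp add: lpp_S)
    also have "\<dots> = Max (S N P l w (Q j)) + c"
      by (rule mono_Max_commute[symmetric, OF _ fin ne[OF that]]) (simp add: mono_def)
    finally show ?thesis by (simp add: lpp_S)
  qed
  have "{w. \<forall>j\<le>N. lpp N P l1 w (Q j) = l1' j} = {w. \<forall>j\<le>N. lpp N P l w (Q j) = l' j}"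
  proof (intro Collect_cong iffI allI impI)
    fix w j assume "\<forall>j\<le>N. lpp N P l1 w (Q j) = l1' j" "j \<le> N"
    then show "lpp N P l w (Q j) = l' j" using lp[of j w] s1[of j] by simp
  next
    fix w j assume "\<forall>j\<le>N. lpp N P l w (Q j) = l' j" "j \<le> N"
    then show "lpp N P l1 w (Q j) = l1' j" using lp[of j w] s1[of j] by simp
  qed
  then show ?thesis unfolding U_def by simp
qed

lemma U_total:
  "(\<Sum>\<^sub>\<infinity>l'\<in>Zvec N. ennreal (U N a c1 c2 P Q l' l)) = 1"
proof -
  let ?M = "measure_pmf (weights N a c1 c2 Q)"
  let ?g = "\<lambda>w. (\<lambda>i. if i \<le> N then lpp N P l w (Q i) else 0) :: nat \<Rightarrow> int"
  have ev: "{w. \<forall>j\<le>N. lpp N P l w (Q j) = l' j} = {w. ?g w = l'}" if "l' \<in> Zvec N" for l'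
    using that unfolding Zvec_def by (auto simp: fun_eq_iff)
  have "(\<Sum>\<^sub>\<infinity>l'\<in>Zvec N. ennreal (U N a c1 c2 P Q l' l)) = (\<Sum>\<^sub>\<infinity>l'\<in>Zvec N. \<integral>\<^sup>+w. indicator {w. ?g w = l'} w \<partial>?M)"
  proof (rule infsum_cong)
    fix l' assume "l' \<in> Zvec N"
    then show "ennreal (U N a c1 c2 P Q l' l) = (\<integral>\<^sup>+w. indicator {w. ?g w = l'} w \<partial>?M)"
      unfolding U_def ev[OF \<open>l' \<in> Zvec N\<close>] by (simp add: measure_pmf.emeasure_eq_measure)
  qed
  also have "\<dots> = (\<integral>\<^sup>+w. (\<Sum>\<^sub>\<infinity>l'\<in>Zvec N. indicator {w. ?g w = l'} w) \<partial>?M)"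
    by (rule infsum_nn_integral_swap[OF countable_Zvec, symmetric])
  also have "\<dots> = (\<integral>\<^sup>+w. 1 \<partial>?M)"
  proof (rule nn_integral_cong)
    fix w
    have gz: "?g w \<in> Zvec N" by (simp add: Zvec_def)
    have "(\<Sum>\<^sub>\<infinity>l'\<in>Zvec N. (indicator {w. ?g w = l'} w :: ennreal)) = indicator {w'. ?g w' = ?g w} w"
      by (rule infsum_single'[OF gz]) auto
    then show "(\<Sum>\<^sub>\<infinity>l'\<in>Zvec N. (indicator {w. ?g w = l'} w :: ennreal)) = 1" by simp
  qed
  also have "\<dots> = 1" by (simp add: measure_pmf.emeasure_space_1)
  finally show ?thesis .
qed

lemma part2:
  assumes dr: "down_right N P" and drQ: "down_right N Q" and ab: "path_above N P Q"
  shows "\<forall>L'\<in>Lvec N. (\<Sum>\<^sub>\<infinity>L\<in>Lvec N. Ub N a c1 c2 P Q L' L * PP N a c1 c2 P L) = PP N a c1 c2 Q L'"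
proof
  have P1: "\<And>l'. l' \<in> Zvec N \<Longrightarrow> (\<Sum>\<^sub>\<infinity>l\<in>Zvec N. ennreal (U N a c1 c2 P Q l' l) * wtP N a c1 c2 P l) = wtP N a c1 c2 Q l'"
    using part1[OF dr drQ ab] by blast
  have cU: "countable (UNIV :: int set)" by simp
  have LZ: "Lvec N \<subseteq> Zvec N" by (auto simp: Lvec_def Zvec_def)
  have A: "(\<Sum>\<^sub>\<infinity>L\<in>Lvec N. Ub N a c1 c2 P Q L' L * wtP N a c1 c2 P L) = wtP N a c1 c2 Q L'" if L': "L' \<in> Lvec N" for L'
  proof -
    let ?f = "\<lambda>l. ennreal (U N a c1 c2 P Q L' l) * wtP N a c1 c2 P l"
    have "(\<Sum>\<^sub>\<infinity>L\<in>Lvec N. Ub N a c1 c2 P Q L' L * wtP N a c1 c2 P L)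
        = (\<Sum>\<^sub>\<infinity>L\<in>Lvec N. \<Sum>\<^sub>\<infinity>x\<in>UNIV. ennreal (U N a c1 c2 P Q (\<lambda>j. if j \<le> N then L' j + x else 0) L) * wtP N a c1 c2 P L)"
      unfolding Ub_def by (rule infsum_cong) (rule infsum_cmult_right_ennreal[OF cU, symmetric])
    also have "\<dots> = (\<Sum>\<^sub>\<infinity>L\<in>Lvec N. \<Sum>\<^sub>\<infinity>x\<in>UNIV. ?f (phi N (L, - x)))"
    proof (rule infsum_cong, rule infsum_cong)
      fix L x assume L: "L \<in> Lvec N"
      have "U N a c1 c2 P Q (\<lambda>j. if j \<le> N then L' j + x else 0) L = U N a c1 c2 P Q L' (phi N (L, - x))"
        by (rule U_shift[OF dr drQ ab, where c=x]) (auto simp: phi_def)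
      moreover have "wtP N a c1 c2 P L = wtP N a c1 c2 P (phi N (L, - x))"
        by (rule wtP_shift[where c=x]) (auto simp: phi_def)
      ultimately show "ennreal (U N a c1 c2 P Q (\<lambda>j. if j \<le> N then L' j + x else 0) L) * wtP N a c1 c2 P L = ?f (phi N (L, - x))"
        by simp
    qed
    also have "\<dots> = (\<Sum>\<^sub>\<infinity>L\<in>Lvec N. \<Sum>\<^sub>\<infinity>x\<in>UNIV. ?f (phi N (L, x)))"
      by (rule infsum_cong) (rule infsum_uminus_int[of "\<lambda>x. ?f (phi N (_, x))"])
    also have "\<dots> = (\<Sum>\<^sub>\<infinity>l\<in>Zvec N. ?f l)" by (rule sum_phi)
    also have "\<dots> = wtP N a c1 c2 Q L'" using P1 L' LZ by blast
    finally show ?thesis .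
  qed
  have T: "(\<Sum>\<^sub>\<infinity>L'\<in>Lvec N. Ub N a c1 c2 P Q L' L) = 1" for L
  proof -
    have "(\<Sum>\<^sub>\<infinity>L'\<in>Lvec N. Ub N a c1 c2 P Q L' L) = (\<Sum>\<^sub>\<infinity>L'\<in>Lvec N. \<Sum>\<^sub>\<infinity>x\<in>UNIV. ennreal (U N a c1 c2 P Q (phi N (L', x)) L))"
      unfolding Ub_def phi_def fst_conv snd_conv ..
    also have "\<dots> = (\<Sum>\<^sub>\<infinity>l'\<in>Zvec N. ennreal (U N a c1 c2 P Q l' L))" by (rule sum_phi)
    also have "\<dots> = 1" by (rule U_total)
    finally show ?thesis .
  qed
  have Z: "Zc N a c1 c2 Q = Zc N a c1 c2 P"
  proof -
    have "Zc N a c1 c2 Q = (\<Sum>\<^sub>\<infinity>L'\<in>Lvec N. \<Sum>\<^sub>\<infinity>L\<in>Lvec N. Ub N a c1 c2 P Q L' L * wtP N a c1 c2 P L)"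
      unfolding Zc_def by (rule infsum_cong) (simp add: A)
    also have "\<dots> = (\<Sum>\<^sub>\<infinity>L\<in>Lvec N. \<Sum>\<^sub>\<infinity>L'\<in>Lvec N. Ub N a c1 c2 P Q L' L * wtP N a c1 c2 P L)"
      by (rule infsum_swap_ennreal[OF countable_Lvec countable_Lvec])
    also have "\<dots> = (\<Sum>\<^sub>\<infinity>L\<in>Lvec N. (\<Sum>\<^sub>\<infinity>L'\<in>Lvec N. Ub N a c1 c2 P Q L' L) * wtP N a c1 c2 P L)"
      by (rule infsum_cong) (rule infsum_cmult_right_ennreal[OF countable_Lvec])
    also have "\<dots> = Zc N a c1 c2 P" unfolding Zc_def T by simp
    finally show ?thesis .
  qed
  fix L' assume L': "L' \<in> Lvec N"
  have "(\<Sum>\<^sub>\<infinity>L\<in>Lvec N. Ub N a c1 c2 P Q L' L * PP N a c1 c2 P L)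
      = (\<Sum>\<^sub>\<infinity>L\<in>Lvec N. Ub N a c1 c2 P Q L' L * wtP N a c1 c2 P L * inverse (Zc N a c1 c2 P))"
    unfolding PP_def divide_ennreal_def by (simp add: mult.assoc)
  also have "\<dots> = (\<Sum>\<^sub>\<infinity>L\<in>Lvec N. Ub N a c1 c2 P Q L' L * wtP N a c1 c2 P L) * inverse (Zc N a c1 c2 P)"
    by (rule infsum_cmult_right_ennreal[OF countable_Lvec])
  also have "\<dots> = PP N a c1 c2 Q L'"
    unfolding PP_def divide_ennreal_def A[OF L'] Z ..
  finally show "(\<Sum>\<^sub>\<infinity>L\<in>Lvec N. Ub N a c1 c2 P Q L' L * PP N a c1 c2 P L) = PP N a c1 c2 Q L'" .
qed

end


theorem theorem2p16:
  fixes N :: nat and a :: "int \<Rightarrow> real" and c1 c2 :: real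
    and P Q :: "nat \<Rightarrow> int \<times> int"
  assumes "N \<ge> 1"
    and "\<And>j. a j > 0" and "\<And>j. a (j + int N) = a j"
    and "c1 > 0" and "c2 > 0"
    and "\<And>i j. a i * a j < 1" and "\<And>i. a i * c1 < 1" and "\<And>i. a i * c2 < 1"
    and "down_right N P" and "down_right N Q" and "path_above N P Q"
  shows "(\<forall>l'\<in>Zvec N.
            (\<Sum>\<^sub>\<infinity>l\<in>Zvec N. ennreal (U N a c1 c2 P Q l' l) * wtP N a c1 c2 P l)
              = wtP N a c1 c2 Q l')
       \<and> (c1 * c2 < 1 \<longrightarrow>
           (\<forall>L'\<in>Lvec N.
              (\<Sum>\<^sub>\<infinity>L\<in>Lvec N. Ub N a c1 c2 P Q L' L * PP N a c1 c2 P L)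
                = PP N a c1 c2 Q L'))"
proof -
  interpret params N a c1 c2
    by unfold_locales (use assms(1-8) in auto)
  show ?thesis using part1[OF assms(9,10,11)] part2[OF assms(9,10,11)] by blast
qed

end
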